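(* Let $\sigma:\mathcal A^*\to\mathcal B^*$ be a non-erasing monoid morphism between free monoids over finite alphabets (i.e. $\sigma(a)$ is non-empty for every $a\in\mathcal A$), let $X\subseteq \mathcal A^{\mathbb Z}$ be a subshift, and let $Y\subseteq\mathcal B^{\mathbb Z}$ be the subshift generated by $\sigma(X)$, i.e. the smallest subshift containing $\sigma(x)$ for all $x\in X$. For $\mu\in\mathcal M(X)$ define the measure $\sigma_{\mathcal M}(\mu)$ on $\mathcal B^{\mathbb Z}$ by $$\sigma_{\mathcal M}(\mu)(B) = \int_X \#\{k : 0\le k<|\sigma(x_1)|,\ T^{k}\sigma(x)\in B\}\, d\mu(x)$$ for Borel sets $B\subseteq \mathcal B^{\mathbb Z}$. Then: (1) $\sigma_{\mathcal M}(\mu)$ is an invariant measure on $Y$, so $\sigma_{\mathcal M}:\mathcal M(X)\to\mathcal M(Y)$ is a well-defined map; (2) $\sigma_{\mathcal M}$ is surjective; (3) $\sigma_{\mathcal M}$ is functorial: if $\sigma':\mathcal C^*\to\mathcal A^*$ is a second non-erasing monoid morphism, $X'\subseteq\mathcal C^{\mathbb Z}$ is a subshift and $X$ is the subshift generated by $\sigma'(X')$, then $(\sigma\circ\sigma')_{\mathcal M} = \sigma_{\mathcal M}\circ\sigma'_{\mathcal M}$ as maps $\mathcal M(X')\to\mathcal M(Y)$.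
   Context: For a finite alphabet $\mathcal A$, $\mathcal A^{\mathbb Z}$ carries the product topology and the shift map $T$, $(Tx)_i = x_{i+1}$. A subshift is a closed set $X$ with $T(X)=X$; $\mathcal M(X)$ denotes the cone of finite $T$-invariant Borel measures on $\mathcal A^{\mathbb Z}$ with support contained in $X$. For a non-erasing morphism $\sigma$ and $x=(x_i)_{i\in\mathbb Z}\in\mathcal A^{\mathbb Z}$, $\sigma(x)\in\mathcal B^{\mathbb Z}$ denotes the biinfinite concatenation $\cdots\sigma(x_{-1})\sigma(x_0)\sigma(x_1)\sigma(x_2)\cdots$, positioned so that the word $\sigma(x_1)$ occupies the coordinates $1,\dots,|\sigma(x_1)|$. (Note that $\sigma_{\mathcal M}(\mu)$ need not be a probability measure even if $\mu$ is.) *)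

theory Defs
  imports "HOL-Analysis.Analysis" "HOL-Probability.Probability"
begin

definition shift :: "(int \<Rightarrow> 'a) \<Rightarrow> (int \<Rightarrow> 'a)" where
  "shift x = (\<lambda>i. x (i + 1))"

definition shift_top :: "(int \<Rightarrow> 'a) topology" where
  "shift_top = product_topology (\<lambda>_. discrete_topology UNIV) UNIV"

definition shift_borel :: "(int \<Rightarrow> 'a) measure" where
  "shift_borel = sigma (topspace shift_top) {U. openin shift_top U}"

definition subshift :: "(int \<Rightarrow> 'a) set \<Rightarrow> bool" where
  "subshift X \<longleftrightarrow> closedin shift_top X \<and> shift ` X = X"

text \<open>Finite shift-invariant Borel measures with support contained in X
  (for closed X this means the complement of X is a null set).\<close>

definition inv_measures :: "(int \<Rightarrow> 'a) set \<Rightarrow> (int \<Rightarrow> 'a) measure set" where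
  "inv_measures X = {M. sets M = sets shift_borel \<and> finite_measure M \<and>
     (\<forall>B \<in> sets shift_borel. emeasure M (shift -` B) = emeasure M B) \<and>
     emeasure M (UNIV - X) = 0}"

text \<open>Non-erasing morphisms, given by the images of letters.\<close>

definition non_erasing :: "('a \<Rightarrow> 'b list) \<Rightarrow> bool" where
  "non_erasing \<sigma> \<longleftrightarrow> (\<forall>a. \<sigma> a \<noteq> [])"

definition morph_comp :: "('a \<Rightarrow> 'b list) \<Rightarrow> ('c \<Rightarrow> 'a list) \<Rightarrow> ('c \<Rightarrow> 'b list)" where
  "morph_comp \<sigma> \<sigma>' = (\<lambda>c. concat (map \<sigma> (\<sigma>' c)))"

text \<open>Cumulative lengths: the word sigma(x_n) occupies the coordinates
  cumlen (n-1) + 1, ..., cumlen n, with cumlen 0 = 0.\<close>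

definition cumlen :: "('a \<Rightarrow> 'b list) \<Rightarrow> (int \<Rightarrow> 'a) \<Rightarrow> int \<Rightarrow> int" where
  "cumlen \<sigma> x n = (if n \<ge> 0 then (\<Sum>k\<in>{1..n}. int (length (\<sigma> (x k))))
                   else - (\<Sum>k\<in>{n+1..0}. int (length (\<sigma> (x k)))))"

definition subst_seq :: "('a \<Rightarrow> 'b list) \<Rightarrow> (int \<Rightarrow> 'a) \<Rightarrow> (int \<Rightarrow> 'b)" where
  "subst_seq \<sigma> x i =
     (let n = (THE n. cumlen \<sigma> x (n - 1) < i \<and> i \<le> cumlen \<sigma> x n)
      in \<sigma> (x n) ! nat (i - cumlen \<sigma> x (n - 1) - 1))"

definition generated_subshift :: "('a \<Rightarrow> 'b list) \<Rightarrow> (int \<Rightarrow> 'a) set \<Rightarrow> (int \<Rightarrow> 'b) set" where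
  "generated_subshift \<sigma> X = \<Inter>{Z. subshift Z \<and> subst_seq \<sigma> ` X \<subseteq> Z}"

definition push_count :: "('a \<Rightarrow> 'b list) \<Rightarrow> (int \<Rightarrow> 'b) set \<Rightarrow> (int \<Rightarrow> 'a) \<Rightarrow> ennreal" where
  "push_count \<sigma> B x =
     of_nat (card {k. k < length (\<sigma> (x 1)) \<and> (shift ^^ k) (subst_seq \<sigma> x) \<in> B})"

definition push_measure ::
  "('a \<Rightarrow> 'b list) \<Rightarrow> (int \<Rightarrow> 'a) set \<Rightarrow> (int \<Rightarrow> 'a) measure \<Rightarrow> (int \<Rightarrow> 'b) measure" where
  "push_measure \<sigma> X \<mu> =
     measure_of UNIV (sets shift_borel) (\<lambda>B. \<integral>\<^sup>+ x \<in> X. push_count \<sigma> B x \<partial>\<mu>)"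

end

theory Submission
  imports Defs "HOL-Library.Diagonal_Subsequence"
begin

abbreviation ell :: "('a \<Rightarrow> 'b list) \<Rightarrow> (int \<Rightarrow> 'a) \<Rightarrow> int \<Rightarrow> int" where
  "ell \<sigma> x n \<equiv> int (length (\<sigma> (x n)))"

lemma cumlen_0[simp]: "cumlen \<sigma> x 0 = 0"
  by (simp add: cumlen_def)

lemma cumlen_diff: "cumlen \<sigma> x n - cumlen \<sigma> x (n - 1) = ell \<sigma> x n"
proof (cases "n \<ge> 1")
  case True
  have "{1..n} = insert n {1..n-1}" using True by auto
  then show ?thesis using True by (simp add: cumlen_def)
next
  case False
  show ?thesis
  proof (cases "n = 0")
    case True then show ?thesis by (simp add: cumlen_def)
  next
    case F2: False
    have "{n..0} = insert n {n+1..0}" using False F2 by auto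
    then show ?thesis using False F2 by (simp add: cumlen_def)
  qed
qed

lemma cumlen_step: "cumlen \<sigma> x n = cumlen \<sigma> x (n - 1) + ell \<sigma> x n"
  using cumlen_diff[of \<sigma> x n] by simp

lemma int_fun_eqI:
  fixes f g :: "int \<Rightarrow> int"
  assumes "f 0 = g 0" and "\<And>n. f n - f (n - 1) = g n - g (n - 1)"
  shows "f = g"
proof
  fix n :: int
  show "f n = g n"
  proof (induction n rule: int_induct[where k=0])
    case base then show ?case using assms by simp
  next
    case (step1 i)
    then show ?case using assms(2)[of "i+1"] by simp
  next
    case (step2 i)
    then show ?case using assms(2)[of "i"] by simp
  qed
qed

lemma ell_ge1: assumes ne: "non_erasing \<sigma>" shows "ell \<sigma> x n \<ge> 1"
proof -
  have "\<sigma> (x n) \<noteq> []" using ne by (simp add: non_erasing_def)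
  then have "length (\<sigma> (x n)) \<ge> 1" by (cases "\<sigma> (x n)") auto
  then show ?thesis by linarith
qed

lemma cumlen_mono:
  assumes ne: "non_erasing \<sigma>" and "a < b"
  shows "cumlen \<sigma> x a < cumlen \<sigma> x b"
  using \<open>a < b\<close>
proof (induction b rule: int_gr_induct)
  case base
  show ?case using cumlen_step[of \<sigma> x "a+1", simplified] ell_ge1[OF ne, of x "a+1"] by linarith
next
  case (step i)
  show ?case using cumlen_step[of \<sigma> x "i+1", simplified] step ell_ge1[OF ne, of x "i+1"] by linarith
qed

lemma cumlen_mono_le:
  assumes ne: "non_erasing \<sigma>" and "a \<le> b"
  shows "cumlen \<sigma> x a \<le> cumlen \<sigma> x b"
  using cumlen_mono[OF ne, of a b x] assms by (cases "a = b") auto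

lemma cumlen_ge_id:
  assumes ne: "non_erasing \<sigma>" and "n \<ge> 0"
  shows "cumlen \<sigma> x n \<ge> n"
  using \<open>n \<ge> 0\<close>
proof (induction n rule: int_ge_induct)
  case base then show ?case by simp
next
  case (step i)
  show ?case using cumlen_step[of \<sigma> x "i+1", simplified] step ell_ge1[OF ne, of x "i+1"] by linarith
qed

lemma cumlen_le_id:
  assumes ne: "non_erasing \<sigma>" and "n \<le> 0"
  shows "cumlen \<sigma> x n \<le> n"
  using \<open>n \<le> 0\<close>
proof (induction n rule: int_le_induct)
  case base then show ?case by simp
next
  case (step i)
  show ?case using cumlen_step[of \<sigma> x "i"] step ell_ge1[OF ne, of x i] by linarith
qed

lemma block_ex1:
  assumes ne: "non_erasing \<sigma>"
  shows "\<exists>!n. cumlen \<sigma> x (n - 1) < i \<and> i \<le> cumlen \<sigma> x n"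
proof -
  define m where "m = min (i - 1) 0"
  have m: "cumlen \<sigma> x m < i" using cumlen_le_id[OF ne, of m x] by (simp add: m_def)
  define n0 where "n0 = max i 0"
  have n0: "i \<le> cumlen \<sigma> x n0"
    using cumlen_ge_id[OF ne, of n0 x] by (auto simp: n0_def max_def)
  have n0m: "n0 \<ge> m" by (simp add: m_def n0_def)
  let ?S = "{k::nat. i \<le> cumlen \<sigma> x (m + int k)}"
  have "nat (n0 - m) \<in> ?S" using n0 n0m by simp
  then have ex: "\<exists>k. k \<in> ?S" by blast
  define K where "K = (LEAST k. k \<in> ?S)"
  have K: "K \<in> ?S" unfolding K_def by (rule LeastI_ex[OF ex])
  have K0: "K > 0" using K m by (cases K) auto
  have "K - 1 \<notin> ?S"
  proof
    assume "K - 1 \<in> ?S"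
    then have "K \<le> K - 1" unfolding K_def by (rule Least_le)
    then show False using K0 by simp
  qed
  moreover have "int (K - 1) = int K - 1" using K0 by simp
  ultimately have "cumlen \<sigma> x (m + int K - 1) < i" by (simp add: add_diff_eq)
  moreover have "i \<le> cumlen \<sigma> x (m + int K)" using K by simp
  ultimately have ex2: "\<exists>n. cumlen \<sigma> x (n - 1) < i \<and> i \<le> cumlen \<sigma> x n" by auto
  show ?thesis
  proof (rule ex_ex1I[OF ex2])
    fix n n' assume a: "cumlen \<sigma> x (n - 1) < i \<and> i \<le> cumlen \<sigma> x n"
      and b: "cumlen \<sigma> x (n' - 1) < i \<and> i \<le> cumlen \<sigma> x n'"
    show "n = n'"
    proof (rule ccontr)
      assume "n \<noteq> n'"
      then consider "n < n'" | "n' < n" by linarith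
      then show False
      proof cases
        case 1
        then have "cumlen \<sigma> x n \<le> cumlen \<sigma> x (n' - 1)" by (intro cumlen_mono_le[OF ne]) auto
        then show False using a b by linarith
      next
        case 2
        then have "cumlen \<sigma> x n' \<le> cumlen \<sigma> x (n - 1)" by (intro cumlen_mono_le[OF ne]) auto
        then show False using a b by linarith
      qed
    qed
  qed
qed

lemma subst_seq_block:
  assumes ne: "non_erasing \<sigma>" and "cumlen \<sigma> x (n - 1) < i" "i \<le> cumlen \<sigma> x n"
  shows "subst_seq \<sigma> x i = \<sigma> (x n) ! nat (i - cumlen \<sigma> x (n - 1) - 1)"
proof -
  have "(THE n. cumlen \<sigma> x (n - 1) < i \<and> i \<le> cumlen \<sigma> x n) = n"
    using the1_equality[OF block_ex1[OF ne]] assms by blast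
  then show ?thesis by (simp add: subst_seq_def)
qed

lemma subst_seq_block':
  assumes ne: "non_erasing \<sigma>" and "j < length (\<sigma> (x n))"
  shows "subst_seq \<sigma> x (cumlen \<sigma> x (n - 1) + 1 + int j) = \<sigma> (x n) ! j"
  using subst_seq_block[OF ne, of x n "cumlen \<sigma> x (n - 1) + 1 + int j"] assms(2)
    cumlen_step[of \<sigma> x n] by simp

lemma shift_pow: "(shift ^^ k) y = (\<lambda>i. y (i + int k))"
  by (induction k arbitrary: y) (auto simp: shift_def add.assoc)

lemma shift_pow_apply: "(shift ^^ k) y i = y (i + int k)"
  by (simp add: shift_pow)

lemma cumlen_shift: "cumlen \<sigma> (shift x) n = cumlen \<sigma> x (n + 1) - ell \<sigma> x 1"
proof -
  have "(\<lambda>n. cumlen \<sigma> (shift x) n) = (\<lambda>n. cumlen \<sigma> x (n + 1) - ell \<sigma> x 1)"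
  proof (rule int_fun_eqI)
    show "cumlen \<sigma> (shift x) 0 = cumlen \<sigma> x (0 + 1) - ell \<sigma> x 1"
      using cumlen_step[of \<sigma> x 1] by simp
    fix n
    show "cumlen \<sigma> (shift x) n - cumlen \<sigma> (shift x) (n - 1) =
          cumlen \<sigma> x (n + 1) - ell \<sigma> x 1 - (cumlen \<sigma> x (n - 1 + 1) - ell \<sigma> x 1)"
      using cumlen_diff[of \<sigma> "shift x" n] cumlen_diff[of \<sigma> x "n+1"] by (simp add: shift_def)
  qed
  then show ?thesis by metis
qed

lemma subst_seq_shift:
  assumes ne: "non_erasing \<sigma>"
  shows "subst_seq \<sigma> (shift x) i = subst_seq \<sigma> x (i + ell \<sigma> x 1)"
proof -
  obtain n where n: "cumlen \<sigma> (shift x) (n - 1) < i" "i \<le> cumlen \<sigma> (shift x) n"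
    using block_ex1[OF ne, of "shift x" i] by blast
  have n': "cumlen \<sigma> x (n + 1 - 1) < i + ell \<sigma> x 1" "i + ell \<sigma> x 1 \<le> cumlen \<sigma> x (n + 1)"
    using n by (simp_all add: cumlen_shift)
  have e: "nat (i - cumlen \<sigma> (shift x) (n - 1) - 1) = nat (i + ell \<sigma> x 1 - cumlen \<sigma> x (n + 1 - 1) - 1)"
    using cumlen_shift[of \<sigma> x "n-1"] by simp
  have "shift x n = x (n + 1)" by (simp add: shift_def)
  then show ?thesis
    using subst_seq_block[OF ne n] subst_seq_block[OF ne n'] e by simp
qed

lemma subst_seq_shift_pow:
  assumes ne: "non_erasing \<sigma>"
  shows "subst_seq \<sigma> ((shift ^^ m) x) i = subst_seq \<sigma> x (i + cumlen \<sigma> x (int m))"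
proof (induction m arbitrary: i)
  case 0 then show ?case by simp
next
  case (Suc m)
  have "subst_seq \<sigma> ((shift ^^ Suc m) x) i = subst_seq \<sigma> (shift ((shift ^^ m) x)) i" by simp
  also have "\<dots> = subst_seq \<sigma> ((shift ^^ m) x) (i + ell \<sigma> ((shift ^^ m) x) 1)"
    by (rule subst_seq_shift[OF ne])
  also have "\<dots> = subst_seq \<sigma> x (i + ell \<sigma> x (1 + int m) + cumlen \<sigma> x (int m))"
  proof -
    have "ell \<sigma> ((shift ^^ m) x) 1 = ell \<sigma> x (1 + int m)" by (simp add: shift_pow_apply)
    then show ?thesis using Suc.IH by simp
  qed
  also have "\<dots> = subst_seq \<sigma> x (i + cumlen \<sigma> x (int (Suc m)))"
    using cumlen_step[of \<sigma> x "int m + 1"] by (simp add: add.commute add.left_commute)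
  finally show ?case .
qed

lemma subst_seq_shift_pow':
  assumes ne: "non_erasing \<sigma>"
  shows "subst_seq \<sigma> ((shift ^^ m) x) = (shift ^^ nat (cumlen \<sigma> x (int m))) (subst_seq \<sigma> x)"
proof (rule ext)
  fix i
  have "cumlen \<sigma> x (int m) \<ge> 0" using cumlen_ge_id[OF ne, of "int m" x] by simp
  then show "subst_seq \<sigma> ((shift ^^ m) x) i = (shift ^^ nat (cumlen \<sigma> x (int m))) (subst_seq \<sigma> x) i"
    by (simp add: shift_pow_apply subst_seq_shift_pow[OF ne])
qed

lemma cumlen_cong:
  assumes "\<And>k. (0 < k \<and> k \<le> j) \<or> (j < k \<and> k \<le> 0) \<Longrightarrow> x k = y k"
  shows "cumlen \<sigma> x j = cumlen \<sigma> y j"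
  unfolding cumlen_def using assms by (auto intro!: sum.cong)

definition agree :: "nat \<Rightarrow> (int \<Rightarrow> 'a) \<Rightarrow> (int \<Rightarrow> 'a) \<Rightarrow> bool" where
  "agree n x y \<longleftrightarrow> (\<forall>i. - int n \<le> i \<and> i \<le> int n \<longrightarrow> x i = y i)"

lemma subst_seq_local:
  assumes ne: "non_erasing \<sigma>" and ag: "agree n x y" and i: "- int n \<le> i" "i \<le> int n"
  shows "subst_seq \<sigma> x i = subst_seq \<sigma> y i"
proof -
  obtain m where m: "cumlen \<sigma> x (m - 1) < i" "i \<le> cumlen \<sigma> x m"
    using block_ex1[OF ne, of x i] by blast
  have eq: "cumlen \<sigma> x (m - 1) = cumlen \<sigma> y (m - 1) \<and> cumlen \<sigma> x m = cumlen \<sigma> y m \<and> x m = y m"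
  proof (cases "m \<ge> 1")
    case True
    have "m - 1 \<le> cumlen \<sigma> x (m - 1)" using cumlen_ge_id[OF ne, of "m-1" x] True by simp
    then have "m \<le> int n" using m i by linarith
    then have xy: "\<And>k. 0 < k \<Longrightarrow> k \<le> m \<Longrightarrow> x k = y k" using ag unfolding agree_def by auto
    show ?thesis using True
      by (auto intro!: cumlen_cong xy)
  next
    case False
    have "cumlen \<sigma> x m \<le> m" using cumlen_le_id[OF ne, of m x] False by simp
    then have "- int n \<le> m" using m i by linarith
    then have xy: "\<And>k. m \<le> k \<Longrightarrow> k \<le> 0 \<Longrightarrow> x k = y k" using ag unfolding agree_def by auto
    show ?thesis using False
      by (auto intro!: cumlen_cong xy)
  qed
  have m': "cumlen \<sigma> y (m - 1) < i" "i \<le> cumlen \<sigma> y m" using m eq by auto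
  show ?thesis using subst_seq_block[OF ne m] subst_seq_block[OF ne m'] eq by simp
qed

lemma cumlen_sum:
  assumes "a \<le> b"
  shows "cumlen \<sigma> z b - cumlen \<sigma> z a = (\<Sum>t\<in>{a<..b}. ell \<sigma> z t)"
  using assms
proof (induction b rule: int_ge_induct)
  case base then show ?case by simp
next
  case (step i)
  have "{a<..i+1} = insert (i+1) {a<..i}" using step by auto
  then show ?case using step cumlen_step[of \<sigma> z "i+1"] by simp
qed

lemma sum_block_reindex:
  "(\<Sum>t\<in>{c<..c + int L}. f t) = (\<Sum>j<L. f (c + 1 + int j))"
proof -
  have "(\<lambda>j. c + 1 + int j) ` {..<L} = {c<..c + int L}"
  proof
    show "{c<..c + int L} \<subseteq> (\<lambda>j. c + 1 + int j) ` {..<L}"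
    proof
      fix t assume "t \<in> {c<..c + int L}"
      then have "t = c + 1 + int (nat (t - c - 1))" "nat (t - c - 1) < L" by auto
      then show "t \<in> (\<lambda>j. c + 1 + int j) ` {..<L}" by blast
    qed
  qed auto
  moreover have "inj_on (\<lambda>j. c + 1 + int j) {..<L}" by (auto simp: inj_on_def)
  ultimately show ?thesis by (metis (no_types, lifting) sum.reindex_cong)
qed

lemma length_concat_map_take:
  assumes "j \<le> length w"
  shows "int (length (concat (map \<sigma> (take j w)))) = (\<Sum>j'<j. int (length (\<sigma> (w ! j'))))"
  using assms
proof (induction j)
  case 0 then show ?case by simp
next
  case (Suc j)
  have "take (Suc j) w = take j w @ [w ! j]" using Suc.prems by (simp add: take_Suc_conv_app_nth)
  then show ?case using Suc by simp
qed

lemma concat_map_nth: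
  assumes "j < length w" "r < length (\<sigma> (w ! j))"
  shows "concat (map \<sigma> w) ! (length (concat (map \<sigma> (take j w))) + r) = \<sigma> (w ! j) ! r"
proof -
  have "w = take j w @ (w ! j) # drop (Suc j) w" using assms(1) by (simp add: id_take_nth_drop)
  then have "concat (map \<sigma> w) = concat (map \<sigma> (take j w)) @ \<sigma> (w ! j) @ concat (map \<sigma> (drop (Suc j) w))"
    by (metis concat.simps(2) concat_append map_append list.simps(9))
  then show ?thesis using assms(2) by (simp add: nth_append)
qed

lemma cumlen_comp:
  assumes ne: "non_erasing \<sigma>" and ne': "non_erasing \<sigma>'"
  shows "cumlen \<sigma> (subst_seq \<sigma>' x) (cumlen \<sigma>' x n) = cumlen (morph_comp \<sigma> \<sigma>') x n"
proof -
  let ?z = "subst_seq \<sigma>' x"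
  have "(\<lambda>n. cumlen \<sigma> ?z (cumlen \<sigma>' x n)) = (\<lambda>n. cumlen (morph_comp \<sigma> \<sigma>') x n)"
  proof (rule int_fun_eqI)
    show "cumlen \<sigma> ?z (cumlen \<sigma>' x 0) = cumlen (morph_comp \<sigma> \<sigma>') x 0" by simp
    fix n
    let ?c = "cumlen \<sigma>' x (n - 1)" and ?w = "\<sigma>' (x n)"
    have cn: "cumlen \<sigma>' x n = ?c + int (length ?w)" using cumlen_step[of \<sigma>' x n] by simp
    have "cumlen \<sigma> ?z (cumlen \<sigma>' x n) - cumlen \<sigma> ?z ?c = (\<Sum>t\<in>{?c<..?c + int (length ?w)}. ell \<sigma> ?z t)"
      unfolding cn by (rule cumlen_sum) simp
    also have "\<dots> = (\<Sum>j<length ?w. ell \<sigma> ?z (?c + 1 + int j))" by (rule sum_block_reindex)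
    also have "\<dots> = (\<Sum>j<length ?w. int (length (\<sigma> (?w ! j))))"
      by (rule sum.cong) (auto simp: subst_seq_block'[OF ne'])
    also have "\<dots> = int (length (concat (map \<sigma> ?w)))"
      using length_concat_map_take[of "length ?w" ?w \<sigma>] by simp
    also have "\<dots> = cumlen (morph_comp \<sigma> \<sigma>') x n - cumlen (morph_comp \<sigma> \<sigma>') x (n - 1)"
      using cumlen_diff[of "morph_comp \<sigma> \<sigma>'" x n] by (simp add: morph_comp_def)
    finally show "cumlen \<sigma> ?z (cumlen \<sigma>' x n) - cumlen \<sigma> ?z (cumlen \<sigma>' x (n - 1)) =
       cumlen (morph_comp \<sigma> \<sigma>') x n - cumlen (morph_comp \<sigma> \<sigma>') x (n - 1)" .
  qed
  then show ?thesis by metis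
qed

lemma non_erasing_comp:
  assumes ne: "non_erasing \<sigma>" and ne': "non_erasing \<sigma>'"
  shows "non_erasing (morph_comp \<sigma> \<sigma>')"
  using assms unfolding non_erasing_def morph_comp_def
  by (metis concat_eq_Nil_conv list.exhaust list.set_intros(1) list.simps(9))

lemma subst_seq_comp:
  assumes ne: "non_erasing \<sigma>" and ne': "non_erasing \<sigma>'"
  shows "subst_seq (morph_comp \<sigma> \<sigma>') x = subst_seq \<sigma> (subst_seq \<sigma>' x)"
proof
  fix p
  let ?z = "subst_seq \<sigma>' x" and ?\<tau> = "morph_comp \<sigma> \<sigma>'"
  obtain t where t: "cumlen \<sigma> ?z (t - 1) < p" "p \<le> cumlen \<sigma> ?z t"
    using block_ex1[OF ne, of ?z p] by blast
  obtain n where n: "cumlen \<sigma>' x (n - 1) < t" "t \<le> cumlen \<sigma>' x n"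
    using block_ex1[OF ne', of x t] by blast
  let ?c = "cumlen \<sigma>' x (n - 1)" and ?w = "\<sigma>' (x n)"
  define j where "j = nat (t - ?c - 1)"
  have tj: "t = ?c + 1 + int j" using n by (simp add: j_def)
  have jw: "j < length ?w" using n cumlen_step[of \<sigma>' x n] by (simp add: j_def)
  have zt: "?z t = ?w ! j" using subst_seq_block'[of \<sigma>' j x n] ne' jw tj by simp
  define r where "r = nat (p - cumlen \<sigma> ?z (t - 1) - 1)"
  have pr: "p = cumlen \<sigma> ?z (t - 1) + 1 + int r" using t by (simp add: r_def)
  have rl: "r < length (\<sigma> (?w ! j))" using t cumlen_step[of \<sigma> ?z t] zt by (simp add: r_def)
  have lhs1: "subst_seq \<sigma> ?z p = \<sigma> (?w ! j) ! r"
    using subst_seq_block'[of \<sigma> r ?z t] ne rl zt pr by simp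
  have c1: "cumlen \<sigma> ?z ?c = cumlen ?\<tau> x (n - 1)" by (rule cumlen_comp[OF ne ne'])
  have c2: "cumlen \<sigma> ?z (cumlen \<sigma>' x n) = cumlen ?\<tau> x n" by (rule cumlen_comp[OF ne ne'])
  have off: "cumlen \<sigma> ?z (t - 1) - cumlen \<sigma> ?z ?c = int (length (concat (map \<sigma> (take j ?w))))"
  proof -
    have "cumlen \<sigma> ?z (t - 1) - cumlen \<sigma> ?z ?c = (\<Sum>s\<in>{?c<..?c + int j}. ell \<sigma> ?z s)"
      using cumlen_sum[of ?c "?c + int j" \<sigma> ?z] tj by simp
    also have "\<dots> = (\<Sum>j'<j. ell \<sigma> ?z (?c + 1 + int j'))" by (rule sum_block_reindex)
    also have "\<dots> = (\<Sum>j'<j. int (length (\<sigma> (?w ! j'))))"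
      using jw by (intro sum.cong) (auto simp: subst_seq_block'[OF ne'])
    also have "\<dots> = int (length (concat (map \<sigma> (take j ?w))))"
      using length_concat_map_take[of j ?w \<sigma>] jw by simp
    finally show ?thesis .
  qed
  have lo: "cumlen \<sigma> ?z ?c \<le> cumlen \<sigma> ?z (t - 1)" using n by (intro cumlen_mono_le[OF ne]) simp
  have hi: "cumlen \<sigma> ?z t \<le> cumlen \<sigma> ?z (cumlen \<sigma>' x n)" using n by (intro cumlen_mono_le[OF ne]) simp
  have pb: "cumlen ?\<tau> x (n - 1) < p" "p \<le> cumlen ?\<tau> x n" using t lo hi c1 c2 by linarith+
  have "subst_seq ?\<tau> x p = ?\<tau> (x n) ! nat (p - cumlen ?\<tau> x (n - 1) - 1)"
    by (rule subst_seq_block[OF non_erasing_comp[OF ne ne'] pb])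
  also have "nat (p - cumlen ?\<tau> x (n - 1) - 1) = length (concat (map \<sigma> (take j ?w))) + r"
    using pr off c1 by simp
  also have "?\<tau> (x n) ! (length (concat (map \<sigma> (take j ?w))) + r) = \<sigma> (?w ! j) ! r"
    unfolding morph_comp_def using concat_map_nth[of j ?w r \<sigma>] jw rl by simp
  finally show "subst_seq ?\<tau> x p = subst_seq \<sigma> ?z p" using lhs1 by simp
qed

definition local_set :: "nat \<Rightarrow> (int \<Rightarrow> 'a) set \<Rightarrow> bool" where
  "local_set n A \<longleftrightarrow> (\<forall>x y. agree n x y \<longrightarrow> (x \<in> A \<longleftrightarrow> y \<in> A))"

definition Loc :: "(int \<Rightarrow> 'a) set set" where
  "Loc = {A. \<exists>n. local_set n A}"

definition cyl :: "nat \<Rightarrow> (int \<Rightarrow> 'a) \<Rightarrow> (int \<Rightarrow> 'a) set" where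
  "cyl n x = {y. agree n x y}"

lemma agree_refl[simp]: "agree n x x" by (simp add: agree_def)
lemma agree_sym: "agree n x y \<Longrightarrow> agree n y x" by (auto simp: agree_def)
lemma agree_trans: "agree n x y \<Longrightarrow> agree n y z \<Longrightarrow> agree n x z" by (auto simp: agree_def)
lemma agree_mono: "agree n x y \<Longrightarrow> m \<le> n \<Longrightarrow> agree m x y" by (auto simp: agree_def)

lemma local_set_mono: "local_set m A \<Longrightarrow> m \<le> n \<Longrightarrow> local_set n A"
  unfolding local_set_def using agree_mono by blast

lemma local_set_compl: "local_set n A \<Longrightarrow> local_set n (- A)"
  unfolding local_set_def by blast
lemma local_set_diff: "local_set n A \<Longrightarrow> local_set n B \<Longrightarrow> local_set n (A - B)"
  unfolding local_set_def by blast
lemma local_set_Un: "local_set n A \<Longrightarrow> local_set n B \<Longrightarrow> local_set n (A \<union> B)"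
  unfolding local_set_def by blast
lemma local_set_Int: "local_set n A \<Longrightarrow> local_set n B \<Longrightarrow> local_set n (A \<inter> B)"
  unfolding local_set_def by blast
lemma local_set_UNIV[simp]: "local_set n UNIV" by (simp add: local_set_def)
lemma local_set_empty[simp]: "local_set n {}" by (simp add: local_set_def)
lemma local_set_cyl: "local_set n (cyl n x)"
  unfolding local_set_def cyl_def using agree_trans agree_sym by blast
lemma cyl_self[simp]: "x \<in> cyl n x" by (simp add: cyl_def)

lemma Loc_UNIV[simp]: "UNIV \<in> Loc" by (auto simp: Loc_def)
lemma Loc_Int: "A \<in> Loc \<Longrightarrow> B \<in> Loc \<Longrightarrow> A \<inter> B \<in> Loc"
proof -
  assume "A \<in> Loc" "B \<in> Loc"
  then obtain n m where "local_set n A" "local_set m B" by (auto simp: Loc_def)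
  then have "local_set (max n m) A" "local_set (max n m) B" by (auto intro: local_set_mono)
  then show ?thesis unfolding Loc_def using local_set_Int by blast
qed
lemma Loc_Un: "A \<in> Loc \<Longrightarrow> B \<in> Loc \<Longrightarrow> A \<union> B \<in> Loc"
proof -
  assume "A \<in> Loc" "B \<in> Loc"
  then obtain n m where "local_set n A" "local_set m B" by (auto simp: Loc_def)
  then have "local_set (max n m) A" "local_set (max n m) B" by (auto intro: local_set_mono)
  then show ?thesis unfolding Loc_def using local_set_Un by blast
qed
lemma Loc_diff: "A \<in> Loc \<Longrightarrow> B \<in> Loc \<Longrightarrow> A - B \<in> Loc"
proof -
  assume "A \<in> Loc" "B \<in> Loc"
  then obtain n m where "local_set n A" "local_set m B" by (auto simp: Loc_def)
  then have "local_set (max n m) A" "local_set (max n m) B" by (auto intro: local_set_mono)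
  then show ?thesis unfolding Loc_def using local_set_diff by blast
qed

lemma Int_stable_Loc: "Int_stable Loc"
  unfolding Int_stable_def using Loc_Int by blast

lemma algebra_Loc: "algebra UNIV Loc"
  unfolding algebra_iff_Un
proof (intro conjI ballI)
  show "Loc \<subseteq> Pow UNIV" by simp
  show "{} \<in> Loc" by (auto simp: Loc_def)
  fix a assume "a \<in> Loc" then show "UNIV - a \<in> Loc" by (rule Loc_diff[OF Loc_UNIV])
next
  fix a b :: "(int \<Rightarrow> 'a) set" assume "a \<in> Loc" "b \<in> Loc" then show "a \<union> b \<in> Loc" by (rule Loc_Un)
qed

lemma ring_of_sets_Loc: "ring_of_sets UNIV Loc"
  using algebra_Loc unfolding algebra_def by blast

lemma topspace_shift_top[simp]: "topspace shift_top = UNIV"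
  by (simp add: shift_top_def)

lemma openin_local: assumes "local_set n A" shows "openin shift_top A"
  unfolding shift_top_def openin_product_topology_alt
proof
  fix x assume x: "x \<in> A"
  define U where "U = (\<lambda>i. if - int n \<le> i \<and> i \<le> int n then {x i} else UNIV)"
  have "{i \<in> UNIV. U i \<noteq> topspace (discrete_topology UNIV)} \<subseteq> {- int n..int n}"
    by (auto simp: U_def)
  then have "finite {i \<in> UNIV. U i \<noteq> topspace (discrete_topology UNIV)}"
    using finite_subset by blast
  moreover have "x \<in> Pi\<^sub>E UNIV U" by (auto simp: U_def PiE_iff)
  moreover have "Pi\<^sub>E UNIV U \<subseteq> A"
  proof
    fix y assume "y \<in> Pi\<^sub>E UNIV U"
    then have "agree n x y" by (auto simp: agree_def U_def PiE_iff split: if_splits)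
    then show "y \<in> A" using assms x unfolding local_set_def by blast
  qed
  ultimately show "\<exists>U. finite {i \<in> UNIV. U i \<noteq> topspace (discrete_topology UNIV)} \<and>
      (\<forall>i\<in>UNIV. openin (discrete_topology UNIV) (U i)) \<and> x \<in> Pi\<^sub>E UNIV U \<and> Pi\<^sub>E UNIV U \<subseteq> A"
    by auto
qed

lemma closedin_local: assumes "local_set n A" shows "closedin shift_top A"
  using openin_local[OF local_set_compl[OF assms]] by (simp add: closedin_def Compl_eq_Diff_UNIV)

lemma open_cyl_cover:
  assumes "openin shift_top U" "x \<in> U"
  shows "\<exists>n. cyl n x \<subseteq> U"
proof -
  obtain V where V: "finite {i \<in> UNIV. V i \<noteq> topspace (discrete_topology UNIV)}"
     "x \<in> Pi\<^sub>E UNIV V" "Pi\<^sub>E UNIV V \<subseteq> U"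
    using assms unfolding shift_top_def openin_product_topology_alt by blast
  define J where "J = {i. V i \<noteq> UNIV}"
  have fJ: "finite J" using V(1) by (simp add: J_def)
  define n where "n = nat (Max (insert 0 (abs ` J)))"
  have J: "\<And>i. i \<in> J \<Longrightarrow> - int n \<le> i \<and> i \<le> int n"
  proof -
    fix i assume "i \<in> J"
    then have "\<bar>i\<bar> \<le> Max (insert 0 (abs ` J))" using fJ by (intro Max_ge) auto
    moreover have "Max (insert 0 (abs ` J)) \<ge> 0" using fJ by (intro Max_ge) auto
    ultimately show "- int n \<le> i \<and> i \<le> int n" by (simp add: n_def) linarith
  qed
  have "cyl n x \<subseteq> Pi\<^sub>E UNIV V"
  proof
    fix y assume "y \<in> cyl n x"
    then have ag: "agree n x y" by (simp add: cyl_def)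
    show "y \<in> Pi\<^sub>E UNIV V"
    proof (simp add: PiE_iff, intro allI)
      fix i show "y i \<in> V i"
      proof (cases "i \<in> J")
        case True then have "y i = x i" using ag J unfolding agree_def by auto
        then show ?thesis using V(2) by auto
      next
        case False then show ?thesis by (simp add: J_def)
      qed
    qed
  qed
  then show ?thesis using V(3) by blast
qed

lemma open_Union_local:
  assumes "openin shift_top U"
  shows "U = (\<Union>n. {x. cyl n x \<subseteq> U})" and "\<And>n. local_set n {x. cyl n x \<subseteq> U}"
proof -
  show "U = (\<Union>n. {x. cyl n x \<subseteq> U})" using open_cyl_cover[OF assms] cyl_self by blast
  fix n
  show "local_set n {x. cyl n x \<subseteq> U}"
    unfolding local_set_def cyl_def using agree_trans agree_sym by blast
qed

lemma sets_shift_borel: "sets shift_borel = sigma_sets UNIV Loc"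
proof -
  have "sets shift_borel = sigma_sets UNIV {U. openin shift_top U}"
    unfolding shift_borel_def by (simp add: sets_measure_of)
  also have "\<dots> = sigma_sets UNIV Loc"
  proof (rule sigma_sets_eqI)
    fix U assume "U \<in> {U. openin shift_top U}"
    then have U: "openin shift_top U" by simp
    have "(\<Union>n. {x. cyl n x \<subseteq> U}) \<in> sigma_sets UNIV Loc"
      using open_Union_local(2)[OF U] by (intro sigma_sets.Union) (auto simp: Loc_def)
    then show "U \<in> sigma_sets UNIV Loc" using open_Union_local(1)[OF U] by simp
  next
    fix A assume "A \<in> Loc"
    then show "A \<in> sigma_sets UNIV {U. openin shift_top U}"
      by (auto simp: Loc_def intro: openin_local)
  qed
  finally show ?thesis .
qed

lemma space_shift_borel[simp]: "space shift_borel = UNIV"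
  by (simp add: shift_borel_def)

lemma shift_borel_eq: "shift_borel = sigma UNIV Loc"
proof -
  have "sigma_sets UNIV {U. openin shift_top U} = sigma_sets UNIV Loc"
    using sets_shift_borel by (simp add: shift_borel_def sets_measure_of)
  then show ?thesis unfolding shift_borel_def topspace_shift_top by (intro sigma_eqI) auto
qed

lemma Loc_sets: "A \<in> Loc \<Longrightarrow> A \<in> sets shift_borel"
  by (simp add: sets_shift_borel)

lemma local_sets: "local_set n A \<Longrightarrow> A \<in> sets shift_borel"
  by (auto simp: sets_shift_borel Loc_def)

lemma open_sets: "openin shift_top U \<Longrightarrow> U \<in> sets shift_borel"
  unfolding shift_borel_def by (auto simp: sets_measure_of)

lemma closed_sets: "closedin shift_top X \<Longrightarrow> X \<in> sets shift_borel"
proof -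
  assume "closedin shift_top X"
  then have "openin shift_top (UNIV - X)" by (simp add: closedin_def)
  then have "UNIV - X \<in> sets shift_borel" by (rule open_sets)
  then have "space shift_borel - (UNIV - X) \<in> sets shift_borel" by blast
  moreover have "UNIV - (UNIV - X) = X" by blast
  ultimately show ?thesis by simp
qed

definition ulocal :: "((int \<Rightarrow> 'a) \<Rightarrow> (int \<Rightarrow> 'b)) \<Rightarrow> bool" where
  "ulocal f \<longleftrightarrow> (\<forall>n. \<exists>m. \<forall>x y. agree m x y \<longrightarrow> agree n (f x) (f y))"

lemma ulocal_comp: "ulocal f \<Longrightarrow> ulocal g \<Longrightarrow> ulocal (f \<circ> g)"
  unfolding ulocal_def by (metis comp_apply)

lemma ulocal_comp': "ulocal f \<Longrightarrow> ulocal g \<Longrightarrow> ulocal (\<lambda>x. f (g x))"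
  using ulocal_comp[of f g] by (simp add: comp_def)

lemma ulocal_preimage:
  assumes "ulocal f" "local_set n A" shows "\<exists>m. local_set m (f -` A)"
proof -
  obtain m where "\<forall>x y. agree m x y \<longrightarrow> agree n (f x) (f y)" using assms(1) unfolding ulocal_def by blast
  then have "local_set m (f -` A)" using assms(2) unfolding local_set_def by auto
  then show ?thesis by blast
qed

lemma ulocal_Loc: "ulocal f \<Longrightarrow> A \<in> Loc \<Longrightarrow> f -` A \<in> Loc"
  unfolding Loc_def using ulocal_preimage by blast

lemma ulocal_measurable:
  fixes f :: "(int \<Rightarrow> 'a) \<Rightarrow> (int \<Rightarrow> 'b)"
  assumes "ulocal f" shows "f \<in> shift_borel \<rightarrow>\<^sub>M shift_borel"
proof -
  have "f \<in> shift_borel \<rightarrow>\<^sub>M sigma UNIV Loc"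
  proof (rule measurable_measure_of)
    fix A :: "(int \<Rightarrow> 'b) set" assume "A \<in> Loc"
    then show "f -` A \<inter> space shift_borel \<in> sets shift_borel"
      using ulocal_Loc[OF assms] by (simp add: Loc_sets)
  qed auto
  moreover have "sigma UNIV (Loc :: (int \<Rightarrow> 'b) set set) = shift_borel" by (rule shift_borel_eq[symmetric])
  ultimately show ?thesis by simp
qed

lemma ulocal_continuous:
  fixes f :: "(int \<Rightarrow> 'a) \<Rightarrow> (int \<Rightarrow> 'b)"
  assumes "ulocal f" shows "continuous_map shift_top shift_top f"
  unfolding shift_top_def continuous_map_componentwise_UNIV
proof
  fix k :: int
  obtain m where m: "\<forall>x y. agree m x y \<longrightarrow> agree (nat \<bar>k\<bar>) (f x) (f y)"
    using assms unfolding ulocal_def by blast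
  show "continuous_map (product_topology (\<lambda>_. discrete_topology UNIV) UNIV) (discrete_topology UNIV) (\<lambda>x. f x k)"
    unfolding continuous_map_def
  proof (intro conjI allI impI)
    fix U :: "'b set"
    have "local_set m {x :: int \<Rightarrow> 'a. f x k \<in> U}"
      unfolding local_set_def
    proof (intro allI impI)
      fix x y :: "int \<Rightarrow> 'a" assume "agree m x y"
      then have "agree (nat \<bar>k\<bar>) (f x) (f y)" using m by blast
      moreover have "- int (nat \<bar>k\<bar>) \<le> k \<and> k \<le> int (nat \<bar>k\<bar>)" by linarith
      ultimately have "f x k = f y k" unfolding agree_def by blast
      then show "(x \<in> {x. f x k \<in> U}) = (y \<in> {x. f x k \<in> U})" by simp
    qed
    then have "openin shift_top {x. f x k \<in> U}" by (rule openin_local)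
    then show "openin (product_topology (\<lambda>_. discrete_topology UNIV) UNIV)
       {x \<in> topspace (product_topology (\<lambda>_. discrete_topology UNIV) UNIV). f x k \<in> U}"
      by (simp add: shift_top_def)
  qed auto
qed

lemma ulocal_shift: "ulocal shift"
  unfolding ulocal_def
proof
  fix n show "\<exists>m. \<forall>x y. agree m x y \<longrightarrow> agree n (shift x) (shift y)"
    by (rule exI[of _ "n+1"]) (auto simp: agree_def shift_def)
qed

lemma ulocal_shift_pow: "ulocal (shift ^^ k)"
proof (induction k)
  case 0 show ?case by (auto simp: ulocal_def)
next
  case (Suc k)
  have "(shift ^^ Suc k) = shift \<circ> (shift ^^ k)" by simp
  then show ?case using ulocal_comp[OF ulocal_shift Suc] by metis
qed

lemma ulocal_subst_seq: "non_erasing \<sigma> \<Longrightarrow> ulocal (subst_seq \<sigma>)"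
  unfolding ulocal_def agree_def using subst_seq_local[unfolded agree_def] by blast

lemma compact_shift_top: "compact_space (shift_top :: (int \<Rightarrow> 'a::finite) topology)"
  unfolding shift_top_def by (simp add: compact_space_product_topology compact_space_discrete_topology)

lemma Hausdorff_shift_top: "Hausdorff_space shift_top"
  unfolding shift_top_def by (simp add: Hausdorff_space_product_topology)

definition Lmax :: "('a::finite \<Rightarrow> 'b list) \<Rightarrow> nat" where
  "Lmax \<sigma> = Max (range (\<lambda>a. length (\<sigma> a)))"

lemma len_le_Lmax: "length (\<sigma> a) \<le> Lmax \<sigma>"
  unfolding Lmax_def by (rule Max_ge) auto

definition gk :: "('a \<Rightarrow> 'b list) \<Rightarrow> nat \<Rightarrow> (int \<Rightarrow> 'a) \<Rightarrow> (int \<Rightarrow> 'b)" where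
  "gk \<sigma> k x = (shift ^^ k) (subst_seq \<sigma> x)"

definition Ek :: "('a \<Rightarrow> 'b list) \<Rightarrow> nat \<Rightarrow> (int \<Rightarrow> 'b) set \<Rightarrow> (int \<Rightarrow> 'a) set" where
  "Ek \<sigma> k B = {x. k < length (\<sigma> (x 1)) \<and> gk \<sigma> k x \<in> B}"

lemma ulocal_gk: "non_erasing \<sigma> \<Longrightarrow> ulocal (gk \<sigma> k)"
  unfolding gk_def by (rule ulocal_comp'[OF ulocal_shift_pow ulocal_subst_seq])

lemma local_len: "local_set 1 {x. k < length (\<sigma> (x (1::int)))}"
  unfolding local_set_def agree_def by auto

lemma Ek_sets:
  assumes ne: "non_erasing \<sigma>" and B: "B \<in> sets shift_borel"
  shows "Ek \<sigma> k B \<in> sets shift_borel"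
proof -
  have "gk \<sigma> k -` B \<inter> space shift_borel \<in> sets shift_borel"
    using measurable_sets[OF ulocal_measurable[OF ulocal_gk[OF ne]] B] .
  moreover have "{x. k < length (\<sigma> (x 1))} \<in> sets shift_borel"
    by (rule local_sets[OF local_len])
  ultimately have "{x. k < length (\<sigma> (x 1))} \<inter> (gk \<sigma> k -` B \<inter> space shift_borel) \<in> sets shift_borel"
    by blast
  moreover have "Ek \<sigma> k B = {x. k < length (\<sigma> (x 1))} \<inter> (gk \<sigma> k -` B \<inter> space shift_borel)"
    by (auto simp: Ek_def)
  ultimately show ?thesis by simp
qed

lemma Ek_local:
  assumes ne: "non_erasing \<sigma>" and B: "B \<in> Loc"
  shows "Ek \<sigma> k B \<in> Loc"
proof -
  have "gk \<sigma> k -` B \<in> Loc" by (rule ulocal_Loc[OF ulocal_gk[OF ne] B])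
  moreover have "{x. k < length (\<sigma> (x 1))} \<in> Loc" using local_len unfolding Loc_def by blast
  ultimately have "{x. k < length (\<sigma> (x 1))} \<inter> gk \<sigma> k -` B \<in> Loc" by (rule Loc_Int[rotated])
  moreover have "Ek \<sigma> k B = {x. k < length (\<sigma> (x 1))} \<inter> gk \<sigma> k -` B" by (auto simp: Ek_def)
  ultimately show ?thesis by simp
qed

lemma push_count_sum:
  "push_count \<sigma> B x = (\<Sum>k<length (\<sigma> (x 1)). indicator B (gk \<sigma> k x))"
proof -
  let ?S = "{k. gk \<sigma> k x \<in> B}"
  have "(\<Sum>k<length (\<sigma> (x 1)). indicator B (gk \<sigma> k x) :: ennreal)
      = (\<Sum>k\<in>{..<length (\<sigma> (x 1))}. if k \<in> ?S then 1 else 0)"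
    by (intro sum.cong) (auto simp: indicator_def)
  also have "\<dots> = (\<Sum>k\<in>{..<length (\<sigma> (x 1))} \<inter> ?S. 1)"
    by (rule sum.inter_restrict[symmetric]) simp
  also have "\<dots> = of_nat (card ({..<length (\<sigma> (x 1))} \<inter> ?S))" by simp
  also have "{..<length (\<sigma> (x 1))} \<inter> ?S = {k. k < length (\<sigma> (x 1)) \<and> (shift ^^ k) (subst_seq \<sigma> x) \<in> B}"
    by (auto simp: gk_def)
  finally show ?thesis by (simp add: push_count_def)
qed

lemma push_count_Ek:
  "push_count \<sigma> B x = (\<Sum>k<Lmax \<sigma>. indicator (Ek \<sigma> k B) x)"
proof -
  have "(\<Sum>k<Lmax \<sigma>. indicator (Ek \<sigma> k B) x :: ennreal)
     = (\<Sum>k<Lmax \<sigma>. if k \<in> {..<length (\<sigma> (x 1))} then indicator B (gk \<sigma> k x) else 0)"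
    by (intro sum.cong) (auto simp: Ek_def indicator_def)
  also have "\<dots> = (\<Sum>k\<in>{..<Lmax \<sigma>} \<inter> {..<length (\<sigma> (x 1))}. indicator B (gk \<sigma> k x))"
    by (rule sum.inter_restrict[symmetric]) simp
  also have "{..<Lmax \<sigma>} \<inter> {..<length (\<sigma> (x 1))} = {..<length (\<sigma> (x 1))}"
    using len_le_Lmax[of \<sigma> "x 1"] by auto
  finally show ?thesis by (simp add: push_count_sum)
qed

lemma measurable_shift_borel_cong:
  assumes "sets \<mu> = sets shift_borel"
  shows "measurable \<mu> N = measurable shift_borel N"
  by (rule measurable_cong_sets[OF assms refl])

lemma push_fun_Ek:
  fixes \<sigma> :: "'a::finite \<Rightarrow> 'b list"
  assumes s: "sets \<mu> = sets shift_borel" and ne: "non_erasing \<sigma>"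
    and X: "X \<in> sets shift_borel" and B: "B \<in> sets shift_borel"
  shows "(\<integral>\<^sup>+ x \<in> X. push_count \<sigma> B x \<partial>\<mu>) = (\<Sum>k<Lmax \<sigma>. emeasure \<mu> (Ek \<sigma> k B \<inter> X))"
proof -
  have "(\<integral>\<^sup>+ x \<in> X. push_count \<sigma> B x \<partial>\<mu>) = (\<integral>\<^sup>+ x. (\<Sum>k<Lmax \<sigma>. indicator (Ek \<sigma> k B \<inter> X) x) \<partial>\<mu>)"
    by (intro nn_integral_cong) (simp add: push_count_Ek sum_distrib_right indicator_inter_arith)
  also have "\<dots> = (\<Sum>k<Lmax \<sigma>. \<integral>\<^sup>+ x. indicator (Ek \<sigma> k B \<inter> X) x \<partial>\<mu>)"
    using Ek_sets[OF ne B] X s by (intro nn_integral_sum) (auto intro!: borel_measurable_indicator)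
  also have "\<dots> = (\<Sum>k<Lmax \<sigma>. emeasure \<mu> (Ek \<sigma> k B \<inter> X))"
    using Ek_sets[OF ne B] X s by (intro sum.cong refl nn_integral_indicator) auto
  finally show ?thesis .
qed

lemma Ek_UN: "Ek \<sigma> k (\<Union>i. A i) = (\<Union>i. Ek \<sigma> k (A i))"
  by (auto simp: Ek_def)

lemma Ek_empty[simp]: "Ek \<sigma> k {} = {}"
  by (auto simp: Ek_def)

lemma push_ca:
  fixes \<sigma> :: "'a::finite \<Rightarrow> 'b list"
  assumes s: "sets \<mu> = sets shift_borel" and ne: "non_erasing \<sigma>"
    and X: "X \<in> sets shift_borel"
  shows "countably_additive (sets shift_borel) (\<lambda>B. \<integral>\<^sup>+ x \<in> X. push_count \<sigma> B x \<partial>\<mu>)"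
  unfolding countably_additive_def
proof (intro allI impI)
  fix A :: "nat \<Rightarrow> (int \<Rightarrow> 'b) set"
  assume A: "range A \<subseteq> sets shift_borel" "disjoint_family A" "\<Union> (range A) \<in> sets shift_borel"
  have "(\<Sum>i. \<integral>\<^sup>+ x \<in> X. push_count \<sigma> (A i) x \<partial>\<mu>) = (\<Sum>i. \<Sum>k<Lmax \<sigma>. emeasure \<mu> (Ek \<sigma> k (A i) \<inter> X))"
    using A by (intro suminf_cong push_fun_Ek[OF s ne X]) auto
  also have "\<dots> = (\<Sum>k<Lmax \<sigma>. \<Sum>i. emeasure \<mu> (Ek \<sigma> k (A i) \<inter> X))"
    by (rule suminf_sum) simp
  also have "\<dots> = (\<Sum>k<Lmax \<sigma>. emeasure \<mu> (Ek \<sigma> k (\<Union>i. A i) \<inter> X))"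
  proof (rule sum.cong[OF refl])
    fix k
    have "(\<Sum>i. emeasure \<mu> (Ek \<sigma> k (A i) \<inter> X)) = emeasure \<mu> (\<Union>i. Ek \<sigma> k (A i) \<inter> X)"
    proof (rule suminf_emeasure)
      show "range (\<lambda>i. Ek \<sigma> k (A i) \<inter> X) \<subseteq> sets \<mu>"
        using A(1) Ek_sets[OF ne] X s by auto
      show "disjoint_family (\<lambda>i. Ek \<sigma> k (A i) \<inter> X)"
        using A(2) unfolding disjoint_family_on_def Ek_def by auto
    qed
    also have "(\<Union>i. Ek \<sigma> k (A i) \<inter> X) = Ek \<sigma> k (\<Union>i. A i) \<inter> X" by (auto simp: Ek_def)
    finally show "(\<Sum>i. emeasure \<mu> (Ek \<sigma> k (A i) \<inter> X)) = emeasure \<mu> (Ek \<sigma> k (\<Union>i. A i) \<inter> X)" .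
  qed
  also have "\<dots> = (\<integral>\<^sup>+ x \<in> X. push_count \<sigma> (\<Union>i. A i) x \<partial>\<mu>)"
    using A by (intro push_fun_Ek[symmetric, OF s ne X]) auto
  finally show "(\<Sum>i. \<integral>\<^sup>+ x \<in> X. push_count \<sigma> (A i) x \<partial>\<mu>) = (\<integral>\<^sup>+ x \<in> X. push_count \<sigma> (\<Union> (range A)) x \<partial>\<mu>)"
    by simp
qed

lemma push_positive:
  "positive (sets shift_borel) (\<lambda>B. \<integral>\<^sup>+ x \<in> X. push_count \<sigma> B x \<partial>\<mu>)"
  unfolding positive_def by (simp add: push_count_def)

lemma sigma_algebra_shift_borel: "sigma_algebra UNIV (sets shift_borel)"
  using sets.sigma_algebra_axioms[of shift_borel] by simp

lemma sets_push_measure[simp]: "sets (push_measure \<sigma> X \<mu>) = sets shift_borel"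
  unfolding push_measure_def
  by (simp add: sets_measure_of_conv sigma_algebra.sigma_sets_eq[OF sigma_algebra_shift_borel])

lemma space_push_measure[simp]: "space (push_measure \<sigma> X \<mu>) = UNIV"
  using sets_eq_imp_space_eq[OF sets_push_measure] by simp

lemma emeasure_push:
  fixes \<sigma> :: "'a::finite \<Rightarrow> 'b list"
  assumes s: "sets \<mu> = sets shift_borel" and ne: "non_erasing \<sigma>"
    and X: "X \<in> sets shift_borel" and B: "B \<in> sets shift_borel"
  shows "emeasure (push_measure \<sigma> X \<mu>) B = (\<integral>\<^sup>+ x \<in> X. push_count \<sigma> B x \<partial>\<mu>)"
  unfolding push_measure_def
  by (rule emeasure_measure_of_sigma[OF sigma_algebra_shift_borel push_positive push_ca[OF s ne X] B])

lemma shift_inj: "inj shift"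
proof (rule injI)
  fix x y :: "int \<Rightarrow> 'a" assume "shift x = shift y"
  then have "\<And>i. x (i - 1 + 1) = y (i - 1 + 1)" unfolding shift_def by metis
  then show "x = y" by auto
qed

definition unshift :: "(int \<Rightarrow> 'a) \<Rightarrow> (int \<Rightarrow> 'a)" where
  "unshift y = (\<lambda>i. y (i - 1))"

lemma shift_unshift[simp]: "shift (unshift y) = y"
  by (simp add: shift_def unshift_def)

lemma subshift_preimage:
  assumes "subshift X" shows "x \<in> X \<longleftrightarrow> shift x \<in> X"
proof
  assume "x \<in> X" then show "shift x \<in> X" using assms unfolding subshift_def by blast
next
  assume "shift x \<in> X"
  then have "shift x \<in> shift ` X" using assms unfolding subshift_def by simp
  then show "x \<in> X" using shift_inj by (auto dest: injD)
qed

lemma subshift_shift_pow: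
  assumes "subshift X" "x \<in> X" shows "(shift ^^ k) x \<in> X"
  by (induction k) (use assms subshift_preimage in auto)

lemma subshift_sets: "subshift X \<Longrightarrow> X \<in> sets shift_borel"
  unfolding subshift_def by (auto intro: closed_sets)

lemma subshift_UNIV: "subshift UNIV"
proof -
  have "shift ` UNIV = UNIV" using shift_unshift by (metis surjI)
  moreover have "closedin shift_top UNIV" using closedin_topspace[of shift_top] by simp
  ultimately show ?thesis unfolding subshift_def by simp
qed

lemma subshift_Inter:
  assumes "F \<noteq> {}" "\<And>Z. Z \<in> F \<Longrightarrow> subshift Z"
  shows "subshift (\<Inter>F)"
  unfolding subshift_def
proof
  show "closedin shift_top (\<Inter>F)" using assms by (intro closedin_Inter) (auto simp: subshift_def)
  show "shift ` \<Inter>F = \<Inter>F"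
  proof
    show "shift ` \<Inter>F \<subseteq> \<Inter>F" using assms(2) subshift_preimage by blast
    show "\<Inter>F \<subseteq> shift ` \<Inter>F"
    proof
      fix y assume y: "y \<in> \<Inter>F"
      have "unshift y \<in> \<Inter>F"
        using y assms(2) subshift_preimage[of _ "unshift y"] by auto
      then show "y \<in> shift ` \<Inter>F" by (metis image_eqI shift_unshift)
    qed
  qed
qed

lemma gen_subshift:
  shows "subshift (generated_subshift \<sigma> X)"
    and "subst_seq \<sigma> ` X \<subseteq> generated_subshift \<sigma> X"
proof -
  have ne: "{Z. subshift Z \<and> subst_seq \<sigma> ` X \<subseteq> Z} \<noteq> {}" using subshift_UNIV by auto
  show "subshift (generated_subshift \<sigma> X)"
    unfolding generated_subshift_def by (rule subshift_Inter[OF ne]) auto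
  show "subst_seq \<sigma> ` X \<subseteq> generated_subshift \<sigma> X"
    unfolding generated_subshift_def by auto
qed

lemma gen_subshift_least:
  "subshift Z \<Longrightarrow> subst_seq \<sigma> ` X \<subseteq> Z \<Longrightarrow> generated_subshift \<sigma> X \<subseteq> Z"
  unfolding generated_subshift_def by auto

lemma indicator_ulocal_measurable:
  fixes f :: "(int \<Rightarrow> 'a) \<Rightarrow> (int \<Rightarrow> 'b)"
  assumes "ulocal f" "B \<in> sets shift_borel"
  shows "(\<lambda>x. indicator B (f x) :: ennreal) \<in> borel_measurable shift_borel"
  using measurable_compose[OF ulocal_measurable[OF assms(1)] borel_measurable_indicator[OF assms(2)]] .

lemma push_count_measurable:
  fixes \<sigma> :: "'a::finite \<Rightarrow> 'b list"
  assumes ne: "non_erasing \<sigma>" and B: "B \<in> sets shift_borel"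
  shows "push_count \<sigma> B \<in> borel_measurable shift_borel"
proof -
  have "(\<lambda>x. \<Sum>k<Lmax \<sigma>. indicator (Ek \<sigma> k B) x :: ennreal) \<in> borel_measurable shift_borel"
    using Ek_sets[OF ne B] by (intro borel_measurable_sum) auto
  moreover have "push_count \<sigma> B = (\<lambda>x. \<Sum>k<Lmax \<sigma>. indicator (Ek \<sigma> k B) x)"
    by (rule ext) (rule push_count_Ek)
  ultimately show ?thesis by simp
qed

lemma distr_shift_eq:
  assumes s: "sets \<mu> = sets shift_borel"
    and inv: "\<forall>B\<in>sets shift_borel. emeasure \<mu> (shift -` B) = emeasure \<mu> B"
  shows "distr \<mu> shift_borel shift = \<mu>"
proof (rule measure_eqI)
  show "sets (distr \<mu> shift_borel shift) = sets \<mu>" using s by simp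
  fix A assume "A \<in> sets (distr \<mu> shift_borel shift)"
  then have A: "A \<in> sets shift_borel" by simp
  have sp: "space \<mu> = UNIV" using sets_eq_imp_space_eq[OF s] by simp
  have m: "shift \<in> \<mu> \<rightarrow>\<^sub>M shift_borel"
    using ulocal_measurable[OF ulocal_shift] by (simp add: measurable_cong_sets[OF s refl])
  show "emeasure (distr \<mu> shift_borel shift) A = emeasure \<mu> A"
    using emeasure_distr[OF m A] inv A sp by simp
qed

lemma push_count_shift:
  assumes ne: "non_erasing \<sigma>"
  shows "push_count \<sigma> (shift -` B) x + indicator B (subst_seq \<sigma> x)
       = push_count \<sigma> B x + indicator B (subst_seq \<sigma> (shift x))"
proof -
  let ?L = "length (\<sigma> (x 1))"
  let ?f = "\<lambda>k. indicator B (gk \<sigma> k x) :: ennreal"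
  have gS: "\<And>k. gk \<sigma> (Suc k) x = shift (gk \<sigma> k x)" by (simp add: gk_def)
  have "push_count \<sigma> (shift -` B) x = (\<Sum>k<?L. ?f (Suc k))"
    by (simp add: push_count_sum gS indicator_def)
  moreover have "?f 0 = indicator B (subst_seq \<sigma> x)" by (simp add: gk_def)
  moreover have "?f ?L = indicator B (subst_seq \<sigma> (shift x))"
  proof -
    have "subst_seq \<sigma> ((shift ^^ 1) x) = (shift ^^ nat (cumlen \<sigma> x 1)) (subst_seq \<sigma> x)"
      using subst_seq_shift_pow'[OF ne, of 1 x] by simp
    moreover have "cumlen \<sigma> x 1 = int ?L" using cumlen_step[of \<sigma> x 1] by simp
    ultimately show ?thesis by (simp add: gk_def)
  qed
  moreover have "(\<Sum>k<?L. ?f (Suc k)) + ?f 0 = (\<Sum>k<?L. ?f k) + ?f ?L"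
    using sum.lessThan_Suc_shift[of ?f ?L] sum.lessThan_Suc[of ?f ?L] by (simp add: add.commute)
  ultimately show ?thesis by (simp add: push_count_sum)
qed

lemma push_invariant:
  fixes \<sigma> :: "'a::finite \<Rightarrow> 'b list"
  assumes ne: "non_erasing \<sigma>" and s: "sets \<mu> = sets shift_borel" and fin: "finite_measure \<mu>"
    and inv: "\<forall>B\<in>sets shift_borel. emeasure \<mu> (shift -` B) = emeasure \<mu> B"
    and X: "subshift X" and B: "B \<in> sets shift_borel"
  shows "(\<integral>\<^sup>+ x \<in> X. push_count \<sigma> (shift -` B) x \<partial>\<mu>) = (\<integral>\<^sup>+ x \<in> X. push_count \<sigma> B x \<partial>\<mu>)"
proof -
  have Xs: "X \<in> sets shift_borel" by (rule subshift_sets[OF X])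
  have sp: "space \<mu> = UNIV" using sets_eq_imp_space_eq[OF s] by simp
  have Bs: "shift -` B \<in> sets shift_borel"
    using measurable_sets[OF ulocal_measurable[OF ulocal_shift] B] by simp
  have meas: "\<And>f. f \<in> borel_measurable shift_borel \<Longrightarrow> f \<in> borel_measurable \<mu>"
    by (simp add: measurable_cong_sets[OF s refl])
  have mX: "(\<lambda>x. indicator X x :: ennreal) \<in> borel_measurable shift_borel"
    using Xs by simp
  have m1: "(\<lambda>x. indicator B (subst_seq \<sigma> x) :: ennreal) \<in> borel_measurable shift_borel"
    by (rule indicator_ulocal_measurable[OF ulocal_subst_seq[OF ne] B])
  have m2: "(\<lambda>x. indicator B (subst_seq \<sigma> (shift x)) :: ennreal) \<in> borel_measurable shift_borel"
    using indicator_ulocal_measurable[OF ulocal_comp'[OF ulocal_subst_seq[OF ne] ulocal_shift] B] .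
  have mm: "\<And>f. f \<in> borel_measurable shift_borel \<Longrightarrow> (\<lambda>x. f x * indicator X x :: ennreal) \<in> borel_measurable \<mu>"
    using meas borel_measurable_times_ennreal mX by blast
  define c where "c = (\<integral>\<^sup>+ x. indicator B (subst_seq \<sigma> x) * indicator X x \<partial>\<mu>)"
  have c2: "(\<integral>\<^sup>+ x. indicator B (subst_seq \<sigma> (shift x)) * indicator X x \<partial>\<mu>) = c"
  proof -
    have "(\<integral>\<^sup>+ x. indicator B (subst_seq \<sigma> (shift x)) * indicator X x \<partial>\<mu>)
        = (\<integral>\<^sup>+ x. indicator B (subst_seq \<sigma> (shift x)) * indicator X (shift x) \<partial>\<mu>)"
      using subshift_preimage[OF X] by (intro nn_integral_cong) (simp add: indicator_def)
    also have "\<dots> = (\<integral>\<^sup>+ x. indicator B (subst_seq \<sigma> x) * indicator X x \<partial>distr \<mu> shift_borel shift)"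
    proof (rule nn_integral_distr[symmetric])
      show "shift \<in> \<mu> \<rightarrow>\<^sub>M shift_borel" using ulocal_measurable[OF ulocal_shift]
        by (simp add: measurable_cong_sets[OF s refl])
      show "(\<lambda>x. indicator B (subst_seq \<sigma> x) * indicator X x :: ennreal) \<in> borel_measurable (distr \<mu> shift_borel shift)"
        by (subst measurable_cong_sets[OF sets_distr refl]) (rule borel_measurable_times_ennreal[OF m1 mX])
    qed
    also have "\<dots> = c" unfolding c_def using distr_shift_eq[OF s inv] by simp
    finally show ?thesis .
  qed
  have cfin: "c \<noteq> \<infinity>"
  proof -
    have "c \<le> (\<integral>\<^sup>+ x. 1 \<partial>\<mu>)" unfolding c_def by (intro nn_integral_mono) (simp add: indicator_def)
    also have "\<dots> = emeasure \<mu> (space \<mu>)" by simp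
    also have "\<dots> < \<infinity>" using finite_measure.emeasure_finite[OF fin] by (simp add: top.not_eq_extremum)
    finally show ?thesis by simp
  qed
  have "(\<integral>\<^sup>+ x \<in> X. push_count \<sigma> (shift -` B) x \<partial>\<mu>) + c
      = (\<integral>\<^sup>+ x. (push_count \<sigma> (shift -` B) x + indicator B (subst_seq \<sigma> x)) * indicator X x \<partial>\<mu>)"
    unfolding c_def distrib_right
    using push_count_measurable[OF ne Bs] m1
    by (intro nn_integral_add[symmetric] mm) auto
  also have "\<dots> = (\<integral>\<^sup>+ x. (push_count \<sigma> B x + indicator B (subst_seq \<sigma> (shift x))) * indicator X x \<partial>\<mu>)"
    by (simp add: push_count_shift[OF ne])
  also have "\<dots> = (\<integral>\<^sup>+ x \<in> X. push_count \<sigma> B x \<partial>\<mu>) + c"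
    unfolding c2[symmetric] distrib_right
    using push_count_measurable[OF ne B] m2
    by (intro nn_integral_add mm) auto
  finally show ?thesis using cfin by (metis ennreal_add_left_cancel add.commute)
qed

lemma push_finite:
  fixes \<sigma> :: "'a::finite \<Rightarrow> 'b list"
  assumes ne: "non_erasing \<sigma>" and s: "sets \<mu> = sets shift_borel" and fin: "finite_measure \<mu>"
    and X: "X \<in> sets shift_borel"
  shows "(\<integral>\<^sup>+ x \<in> X. push_count \<sigma> B x \<partial>\<mu>) \<noteq> \<infinity>"
proof -
  have "(\<integral>\<^sup>+ x \<in> X. push_count \<sigma> B x \<partial>\<mu>) \<le> (\<integral>\<^sup>+ x. of_nat (Lmax \<sigma>) \<partial>\<mu>)"
  proof (intro nn_integral_mono)
    fix x
    have "push_count \<sigma> B x \<le> of_nat (Lmax \<sigma>)"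
    proof -
      have "card {k. k < length (\<sigma> (x 1)) \<and> (shift ^^ k) (subst_seq \<sigma> x) \<in> B} \<le> card {..<length (\<sigma> (x 1))}"
        by (intro card_mono) auto
      also have "\<dots> \<le> Lmax \<sigma>" using len_le_Lmax by simp
      finally show ?thesis unfolding push_count_def by simp
    qed
    then show "push_count \<sigma> B x * indicator X x \<le> of_nat (Lmax \<sigma>)"
      by (simp add: indicator_def)
  qed
  also have "\<dots> = of_nat (Lmax \<sigma>) * emeasure \<mu> (space \<mu>)" by simp
  also have "\<dots> < \<infinity>" using finite_measure.emeasure_finite[OF fin]
    by (simp add: ennreal_mult_less_top of_nat_less_top top.not_eq_extremum)
  finally show ?thesis by simp
qed

lemma push_support:
  assumes ne: "non_erasing \<sigma>" and X: "subshift X"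
  shows "push_count \<sigma> (UNIV - generated_subshift \<sigma> X) x * indicator X x = 0"
proof (cases "x \<in> X")
  case True
  have "\<And>k. (shift ^^ k) (subst_seq \<sigma> x) \<in> generated_subshift \<sigma> X"
    using gen_subshift(2)[of \<sigma> X] True by (intro subshift_shift_pow[OF gen_subshift(1)]) auto
  then show ?thesis by (simp add: push_count_def)
qed simp

lemma part1:
  fixes \<sigma> :: "'a::finite \<Rightarrow> 'b list"
  assumes ne: "non_erasing \<sigma>" and X: "subshift X" and \<mu>: "\<mu> \<in> inv_measures X"
  shows "push_measure \<sigma> X \<mu> \<in> inv_measures (generated_subshift \<sigma> X)"
    and "\<And>B. B \<in> sets shift_borel \<Longrightarrow> emeasure (push_measure \<sigma> X \<mu>) B = (\<integral>\<^sup>+ x \<in> X. push_count \<sigma> B x \<partial>\<mu>)"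
proof -
  have s: "sets \<mu> = sets shift_borel" and fin: "finite_measure \<mu>"
    and inv: "\<forall>B\<in>sets shift_borel. emeasure \<mu> (shift -` B) = emeasure \<mu> B"
    using \<mu> unfolding inv_measures_def by auto
  have Xs: "X \<in> sets shift_borel" by (rule subshift_sets[OF X])
  note em = emeasure_push[OF s ne Xs]
  show "\<And>B. B \<in> sets shift_borel \<Longrightarrow> emeasure (push_measure \<sigma> X \<mu>) B = (\<integral>\<^sup>+ x \<in> X. push_count \<sigma> B x \<partial>\<mu>)"
    by (rule em)
  let ?Y = "generated_subshift \<sigma> X"
  have Ys: "?Y \<in> sets shift_borel" by (rule subshift_sets[OF gen_subshift(1)])
  have "finite_measure (push_measure \<sigma> X \<mu>)"
  proof (rule finite_measureI)
    have "UNIV \<in> sets shift_borel" by (metis sets.top space_shift_borel)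
    then show "emeasure (push_measure \<sigma> X \<mu>) (space (push_measure \<sigma> X \<mu>)) \<noteq> \<infinity>"
    proof -
      have "emeasure (push_measure \<sigma> X \<mu>) UNIV = (\<integral>\<^sup>+ x \<in> X. push_count \<sigma> UNIV x \<partial>\<mu>)"
        by (rule em) fact
      then show ?thesis using push_finite[OF ne s fin Xs, of UNIV] by simp
    qed
  qed
  moreover have "\<forall>B\<in>sets shift_borel. emeasure (push_measure \<sigma> X \<mu>) (shift -` B) = emeasure (push_measure \<sigma> X \<mu>) B"
  proof
    fix B :: "(int \<Rightarrow> 'b) set" assume B: "B \<in> sets shift_borel"
    have Bs: "shift -` B \<in> sets shift_borel"
      using measurable_sets[OF ulocal_measurable[OF ulocal_shift] B] by simp
    show "emeasure (push_measure \<sigma> X \<mu>) (shift -` B) = emeasure (push_measure \<sigma> X \<mu>) B"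
      using em[OF Bs] em[OF B] push_invariant[OF ne s fin inv X B] by simp
  qed
  moreover have "emeasure (push_measure \<sigma> X \<mu>) (UNIV - ?Y) = 0"
  proof -
    have "UNIV - ?Y \<in> sets shift_borel" using Ys
      by (metis sets.compl_sets space_shift_borel)
    moreover have "(\<lambda>x. push_count \<sigma> (UNIV - ?Y) x * indicator X x) = (\<lambda>x. 0)"
      using push_support[OF ne X] by (intro ext) blast
    ultimately show ?thesis using em by simp
  qed
  ultimately show "push_measure \<sigma> X \<mu> \<in> inv_measures ?Y"
    unfolding inv_measures_def by simp
qed

lemma sum_lessThan_add_split:
  fixes f :: "nat \<Rightarrow> 'x::comm_monoid_add"
  shows "(\<Sum>i<a + b. f i) = (\<Sum>i<a. f i) + (\<Sum>k<b. f (a + k))"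
  by (induction b) (simp_all add: add.assoc)

lemma cumlen_nat_step:
  assumes ne: "non_erasing \<sigma>"
  shows "nat (cumlen \<sigma> z (int (Suc j))) = nat (cumlen \<sigma> z (int j)) + length (\<sigma> (z (1 + int j)))"
proof -
  have "cumlen \<sigma> z (int j) \<ge> 0" using cumlen_ge_id[OF ne, of "int j" z] by simp
  moreover have "cumlen \<sigma> z (int (Suc j)) = cumlen \<sigma> z (int j) + int (length (\<sigma> (z (1 + int j))))"
    using cumlen_step[of \<sigma> z "int j + 1"] by (simp add: add.commute)
  ultimately show ?thesis by (simp add: nat_add_distrib)
qed

lemma push_count_blocks:
  assumes ne: "non_erasing \<sigma>"
  shows "(\<Sum>j<M. push_count \<sigma> B ((shift ^^ j) z))
       = (\<Sum>i<nat (cumlen \<sigma> z (int M)). indicator B ((shift ^^ i) (subst_seq \<sigma> z)))"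
proof (induction M)
  case 0 then show ?case by simp
next
  case (Suc M)
  let ?f = "\<lambda>i. indicator B ((shift ^^ i) (subst_seq \<sigma> z)) :: ennreal"
  let ?c = "nat (cumlen \<sigma> z (int M))"
  have "push_count \<sigma> B ((shift ^^ M) z) = (\<Sum>k<length (\<sigma> (z (1 + int M))). ?f (?c + k))"
  proof -
    have "push_count \<sigma> B ((shift ^^ M) z) = (\<Sum>k<length (\<sigma> (((shift ^^ M) z) 1)). indicator B (gk \<sigma> k ((shift ^^ M) z)))"
      by (rule push_count_sum)
    also have "\<dots> = (\<Sum>k<length (\<sigma> (z (1 + int M))). ?f (?c + k))"
    proof (rule sum.cong)
      show "{..<length (\<sigma> ((shift ^^ M) z 1))} = {..<length (\<sigma> (z (1 + int M)))}"
        by (simp add: shift_pow_apply)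
      fix k
      have "gk \<sigma> k ((shift ^^ M) z) = (shift ^^ k) ((shift ^^ ?c) (subst_seq \<sigma> z))"
        unfolding gk_def subst_seq_shift_pow'[OF ne] ..
      also have "\<dots> = (shift ^^ (?c + k)) (subst_seq \<sigma> z)"
        by (simp add: funpow_add add.commute)
      finally show "indicator B (gk \<sigma> k ((shift ^^ M) z)) = ?f (?c + k)" by simp
    qed
    finally show ?thesis .
  qed
  then show ?case using Suc cumlen_nat_step[OF ne, of z M] sum_lessThan_add_split[of ?f ?c]
    by simp
qed

lemma push_count_comp:
  assumes ne: "non_erasing \<sigma>" and ne': "non_erasing \<sigma>'"
  shows "(\<Sum>j<length (\<sigma>' (x 1)). push_count \<sigma> B (gk \<sigma>' j x)) = push_count (morph_comp \<sigma> \<sigma>') B x"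
proof -
  let ?z = "subst_seq \<sigma>' x"
  have "(\<Sum>j<length (\<sigma>' (x 1)). push_count \<sigma> B (gk \<sigma>' j x))
      = (\<Sum>i<nat (cumlen \<sigma> ?z (int (length (\<sigma>' (x 1))))). indicator B ((shift ^^ i) (subst_seq \<sigma> ?z)))"
    unfolding gk_def by (rule push_count_blocks[OF ne])
  also have "int (length (\<sigma>' (x 1))) = cumlen \<sigma>' x 1" using cumlen_step[of \<sigma>' x 1] by simp
  also have "cumlen \<sigma> ?z (cumlen \<sigma>' x 1) = cumlen (morph_comp \<sigma> \<sigma>') x 1" by (rule cumlen_comp[OF ne ne'])
  also have "\<dots> = int (length (morph_comp \<sigma> \<sigma>' (x 1)))" using cumlen_step[of "morph_comp \<sigma> \<sigma>'" x 1] by simp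
  also have "subst_seq \<sigma> ?z = subst_seq (morph_comp \<sigma> \<sigma>') x" by (rule subst_seq_comp[OF ne ne', symmetric])
  finally show ?thesis by (simp add: push_count_sum gk_def)
qed

lemma part3:
  fixes \<sigma> :: "'a::finite \<Rightarrow> 'b::finite list" and \<sigma>' :: "'c::finite \<Rightarrow> 'a list"
  assumes ne: "non_erasing \<sigma>" and ne': "non_erasing \<sigma>'" and X': "subshift X'"
    and XX: "X = generated_subshift \<sigma>' X'" and \<mu>: "\<mu> \<in> inv_measures X'"
  shows "push_measure (morph_comp \<sigma> \<sigma>') X' \<mu> = push_measure \<sigma> X (push_measure \<sigma>' X' \<mu>)"
proof -
  let ?\<nu> = "push_measure \<sigma>' X' \<mu>" and ?\<tau> = "morph_comp \<sigma> \<sigma>'"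
  have s: "sets \<mu> = sets shift_borel" using \<mu> unfolding inv_measures_def by auto
  have X'' : "X' \<in> sets shift_borel" by (rule subshift_sets[OF X'])
  have Xsub: "subshift X" unfolding XX by (rule gen_subshift(1))
  have Xs: "X \<in> sets shift_borel" by (rule subshift_sets[OF Xsub])
  have inX: "\<And>x j. x \<in> X' \<Longrightarrow> gk \<sigma>' j x \<in> X"
    unfolding gk_def XX using gen_subshift(2)[of \<sigma>' X']
    by (intro subshift_shift_pow[OF gen_subshift(1)]) auto
  have meas: "\<And>f. f \<in> borel_measurable shift_borel \<Longrightarrow> f \<in> borel_measurable \<mu>"
    by (simp add: measurable_cong_sets[OF s refl])
  have eq: "(\<integral>\<^sup>+ x \<in> X'. push_count ?\<tau> B x \<partial>\<mu>) = (\<integral>\<^sup>+ x \<in> X. push_count \<sigma> B x \<partial>?\<nu>)"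
    if B: "B \<in> sets shift_borel" for B
  proof -
    have Eks: "\<And>k. Ek \<sigma> k B \<inter> X \<in> sets shift_borel" using Ek_sets[OF ne B] Xs by blast
    have pw: "(\<Sum>k<Lmax \<sigma>. push_count \<sigma>' (Ek \<sigma> k B \<inter> X) x * indicator X' x) = push_count ?\<tau> B x * indicator X' x" for x
    proof (cases "x \<in> X'")
      case True
      have "(\<Sum>k<Lmax \<sigma>. push_count \<sigma>' (Ek \<sigma> k B \<inter> X) x)
          = (\<Sum>k<Lmax \<sigma>. \<Sum>j<length (\<sigma>' (x 1)). indicator (Ek \<sigma> k B \<inter> X) (gk \<sigma>' j x))"
        by (simp add: push_count_sum)
      also have "\<dots> = (\<Sum>j<length (\<sigma>' (x 1)). \<Sum>k<Lmax \<sigma>. indicator (Ek \<sigma> k B \<inter> X) (gk \<sigma>' j x))"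
        by (rule sum.swap)
      also have "\<dots> = (\<Sum>j<length (\<sigma>' (x 1)). push_count \<sigma> B (gk \<sigma>' j x))"
        using inX[OF True] by (intro sum.cong refl) (simp add: push_count_Ek indicator_inter_arith)
      also have "\<dots> = push_count ?\<tau> B x" by (rule push_count_comp[OF ne ne'])
      finally show ?thesis using True by (simp add: sum_distrib_right[symmetric])
    qed simp
    have "(\<integral>\<^sup>+ x \<in> X. push_count \<sigma> B x \<partial>?\<nu>) = (\<Sum>k<Lmax \<sigma>. emeasure ?\<nu> (Ek \<sigma> k B \<inter> X))"
      by (rule push_fun_Ek[OF sets_push_measure ne Xs B])
    also have "\<dots> = (\<Sum>k<Lmax \<sigma>. \<integral>\<^sup>+ x \<in> X'. push_count \<sigma>' (Ek \<sigma> k B \<inter> X) x \<partial>\<mu>)"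
      by (intro sum.cong refl emeasure_push[OF s ne' X''] Eks)
    also have "\<dots> = (\<integral>\<^sup>+ x. (\<Sum>k<Lmax \<sigma>. push_count \<sigma>' (Ek \<sigma> k B \<inter> X) x * indicator X' x) \<partial>\<mu>)"
      using push_count_measurable[OF ne' Eks] X''
      by (intro nn_integral_sum[symmetric] meas borel_measurable_times_ennreal) auto
    also have "\<dots> = (\<integral>\<^sup>+ x \<in> X'. push_count ?\<tau> B x \<partial>\<mu>)" by (simp add: pw)
    finally show ?thesis by simp
  qed
  show ?thesis
    unfolding push_measure_def[of ?\<tau> X' \<mu>] push_measure_def[of \<sigma> X ?\<nu>]
    by (rule measure_of_eq) (auto simp: sigma_algebra.sigma_sets_eq[OF sigma_algebra_shift_borel] intro!: eq)
qed

lemma gk_len: "non_erasing \<sigma> \<Longrightarrow> gk \<sigma> (length (\<sigma> (x 1))) x = subst_seq \<sigma> (shift x)"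
proof -
  assume ne: "non_erasing \<sigma>"
  have "subst_seq \<sigma> ((shift ^^ 1) x) = (shift ^^ nat (cumlen \<sigma> x 1)) (subst_seq \<sigma> x)"
    using subst_seq_shift_pow'[OF ne, of 1 x] by simp
  moreover have "cumlen \<sigma> x 1 = int (length (\<sigma> (x 1)))" using cumlen_step[of \<sigma> x 1] by simp
  ultimately show ?thesis by (simp add: gk_def)
qed

lemma gk_Suc: "gk \<sigma> (Suc k) x = shift (gk \<sigma> k x)"
  by (simp add: gk_def)

lemma gk_0: "gk \<sigma> 0 x = subst_seq \<sigma> x"
  by (simp add: gk_def)

lemma len_pos: "non_erasing \<sigma> \<Longrightarrow> 0 < length (\<sigma> a)"
  by (simp add: non_erasing_def)

lemma gen_char:
  fixes \<sigma> :: "'a::finite \<Rightarrow> 'b list"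
  assumes ne: "non_erasing \<sigma>" and X: "subshift X" and y: "y \<in> generated_subshift \<sigma> X"
  shows "\<exists>x k. x \<in> X \<and> k < length (\<sigma> (x 1)) \<and> y = gk \<sigma> k x"
proof -
  define Z where "Z = {gk \<sigma> k x | x k. x \<in> X \<and> k < length (\<sigma> (x 1))}"
  have Zeq: "Z = (\<Union>k<Lmax \<sigma>. gk \<sigma> k ` (X \<inter> {x. k < length (\<sigma> (x 1))}))"
    unfolding Z_def using len_le_Lmax[of \<sigma>] by (auto intro: less_le_trans)
  have Xc: "closedin shift_top X" using X by (simp add: subshift_def)
  have "closedin shift_top Z"
    unfolding Zeq
  proof (rule closedin_Union)
    show "finite ((\<lambda>k. gk \<sigma> k ` (X \<inter> {x. k < length (\<sigma> (x 1))})) ` {..<Lmax \<sigma>})" by simp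
    fix T assume "T \<in> (\<lambda>k. gk \<sigma> k ` (X \<inter> {x. k < length (\<sigma> (x 1))})) ` {..<Lmax \<sigma>}"
    then obtain k where T: "T = gk \<sigma> k ` (X \<inter> {x. k < length (\<sigma> (x 1))})" by blast
    have "closedin shift_top (X \<inter> {x. k < length (\<sigma> (x 1))})"
      using Xc closedin_local[OF local_len] by (rule closedin_Int)
    then have "compactin shift_top (X \<inter> {x. k < length (\<sigma> (x 1))})"
      by (rule closedin_compact_space[OF compact_shift_top])
    then have "compactin shift_top T"
      unfolding T by (rule image_compactin[OF _ ulocal_continuous[OF ulocal_gk[OF ne]]])
    then show "closedin shift_top T" by (rule compactin_imp_closedin[OF Hausdorff_shift_top])
  qed
  moreover have "shift ` Z = Z"
  proof
    show "shift ` Z \<subseteq> Z"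
    proof
      fix z assume "z \<in> shift ` Z"
      then obtain x k where xk: "x \<in> X" "k < length (\<sigma> (x 1))" "z = shift (gk \<sigma> k x)"
        unfolding Z_def by blast
      show "z \<in> Z"
      proof (cases "Suc k < length (\<sigma> (x 1))")
        case True
        have "z = gk \<sigma> (Suc k) x" using xk by (simp add: gk_Suc)
        then show ?thesis using xk True unfolding Z_def by blast
      next
        case False
        then have "Suc k = length (\<sigma> (x 1))" using xk by simp
        then have "z = gk \<sigma> 0 (shift x)" using xk gk_len[OF ne, of x] by (simp add: gk_Suc[symmetric] gk_0)
        moreover have "shift x \<in> X" using xk subshift_preimage[OF X] by simp
        ultimately show ?thesis unfolding Z_def using len_pos[OF ne] by blast
      qed
    qed
    show "Z \<subseteq> shift ` Z"
    proof
      fix z assume "z \<in> Z"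
      then obtain x k where xk: "x \<in> X" "k < length (\<sigma> (x 1))" "z = gk \<sigma> k x"
        unfolding Z_def by blast
      show "z \<in> shift ` Z"
      proof (cases k)
        case (Suc k')
        then have "z = shift (gk \<sigma> k' x)" using xk by (simp add: gk_Suc)
        moreover have "k' < length (\<sigma> (x 1))" using xk Suc by simp
        then have "gk \<sigma> k' x \<in> Z" using xk unfolding Z_def by blast
        ultimately show ?thesis by blast
      next
        case 0
        let ?x0 = "unshift x"
        have x0: "?x0 \<in> X" using xk subshift_preimage[OF X, of ?x0] by simp
        define L where "L = length (\<sigma> (?x0 1))"
        have L: "0 < L" unfolding L_def by (rule len_pos[OF ne])
        have "z = gk \<sigma> L ?x0" using xk 0 gk_len[OF ne, of ?x0] by (simp add: gk_0 L_def)
        also have "\<dots> = shift (gk \<sigma> (L - 1) ?x0)" using L gk_Suc[of \<sigma> "L - 1" ?x0] by simp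
        finally have "z = shift (gk \<sigma> (L - 1) ?x0)" .
        moreover have "gk \<sigma> (L - 1) ?x0 \<in> Z" using x0 L unfolding Z_def L_def by force
        ultimately show ?thesis by blast
      qed
    qed
  qed
  ultimately have "subshift Z" by (simp add: subshift_def)
  moreover have "subst_seq \<sigma> ` X \<subseteq> Z"
    unfolding Z_def using len_pos[OF ne] by (force simp: gk_0)
  ultimately have "generated_subshift \<sigma> X \<subseteq> Z" by (rule gen_subshift_least)
  then show ?thesis using y unfolding Z_def by blast
qed

lemma diagonal_convergent:
  fixes f :: "nat \<Rightarrow> nat \<Rightarrow> real"
  assumes bdd: "\<And>n k. \<bar>f k n\<bar> \<le> M"
  shows "\<exists>d. strict_mono (d::nat \<Rightarrow> nat) \<and> (\<forall>n. convergent (\<lambda>k. f (d k) n))"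
proof -
  let ?P = "\<lambda>n. \<lambda>s. convergent (\<lambda>k. f (s k) n)"
  interpret nat: subseqs ?P
  proof (unfold convergent_def, unfold subseqs_def, auto)
    fix n :: nat and s :: "nat \<Rightarrow> nat" assume s: "strict_mono s"
    have "bounded {-M..M}"
      using bounded_closed_interval by auto
    moreover have "\<And>k. f (s k) n \<in> {-M..M}"
      using bdd by (simp add: abs_le_iff minus_le_iff)
    ultimately have "\<exists>l s'. strict_mono s' \<and> ((\<lambda>k. f (s k) n) \<circ> s') \<longlonglongrightarrow> l"
      using compact_Icc compact_imp_seq_compact seq_compactE by metis
    thus "\<exists>s'. strict_mono (s'::nat\<Rightarrow>nat) \<and> (\<exists>l. (\<lambda>k. f (s (s' k)) n) \<longlonglongrightarrow> l)"
      by (auto simp: comp_def)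
  qed
  define d where "d = nat.diagseq"
  have subseq: "strict_mono d"
    unfolding d_def using nat.subseq_diagseq by auto
  have cnv: "?P n d" for n
  proof -
    have Pn_seqseq: "?P n (nat.seqseq (Suc n))"
      by (rule nat.seqseq_holds)
    have 1: "(\<lambda>k. f ((nat.seqseq (Suc n) \<circ> (\<lambda>k. nat.fold_reduce (Suc n) k
      (Suc n + k))) k) n) = (\<lambda>k. f (nat.seqseq (Suc n) k) n) \<circ>
      (\<lambda>k. nat.fold_reduce (Suc n) k (Suc n + k))"
      by auto
    have 2: "?P n (d \<circ> ((+) (Suc n)))"
      unfolding d_def nat.diagseq_seqseq 1
      by (intro convergent_subseq_convergent Pn_seqseq nat.subseq_diagonal_rest)
    then obtain L where 3: "(\<lambda>na. f (d (na + Suc n)) n) \<longlonglongrightarrow> L"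
      by (auto simp: add.commute dest: convergentD)
    then have "(\<lambda>k. f (d k) n) \<longlonglongrightarrow> L"
      by (rule LIMSEQ_offset)
    then show ?thesis
      by (auto simp: convergent_def)
  qed
  show ?thesis using subseq cnv by blast
qed

definition Cs :: "nat \<Rightarrow> (int \<Rightarrow> 'b) set \<Rightarrow> (int \<Rightarrow> 'b) set set" where
  "Cs R Y = {cyl R y | y. y \<in> Y}"

definition yC :: "(int \<Rightarrow> 'b) set \<Rightarrow> (int \<Rightarrow> 'b) set \<Rightarrow> (int \<Rightarrow> 'b)" where
  "yC Y C = (SOME y. y \<in> C \<inter> Y)"

lemma yC: "C \<in> Cs R Y \<Longrightarrow> yC Y C \<in> C \<inter> Y"
proof -
  assume "C \<in> Cs R Y"
  then obtain y where "y \<in> C \<inter> Y" unfolding Cs_def using cyl_self by blast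
  then show ?thesis unfolding yC_def by (rule someI[where P="\<lambda>y. y \<in> C \<inter> Y"])
qed

lemma cyl_eq: "y \<in> cyl R z \<Longrightarrow> cyl R y = cyl R z"
  unfolding cyl_def using agree_trans agree_sym by blast

lemma Cs_yC: "C \<in> Cs R Y \<Longrightarrow> C = cyl R (yC Y C)"
  using yC[of C R Y] unfolding Cs_def by (auto simp: cyl_eq)

lemma finite_Cs: "finite (Cs R (Y :: (int \<Rightarrow> 'b::finite) set))"
proof -
  let ?r = "\<lambda>y :: int \<Rightarrow> 'b. restrict y {- int R..int R}"
  have "Cs R Y \<subseteq> (\<lambda>y. cyl R y) ` (Pi\<^sub>E {- int R..int R} (\<lambda>_. UNIV))"
  proof
    fix C assume "C \<in> Cs R Y"
    then obtain y where C: "C = cyl R y" unfolding Cs_def by blast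
    have "cyl R y = cyl R (?r y)" unfolding cyl_def agree_def by auto
    moreover have "?r y \<in> Pi\<^sub>E {- int R..int R} (\<lambda>_. UNIV)" by simp
    ultimately show "C \<in> (\<lambda>y. cyl R y) ` (Pi\<^sub>E {- int R..int R} (\<lambda>_. UNIV))" using C by blast
  qed
  moreover have "finite (Pi\<^sub>E {- int R..int R} (\<lambda>_. UNIV :: 'b set))" by (intro finite_PiE) auto
  ultimately show ?thesis using finite_subset by blast
qed

lemma Cs_disjoint: "C \<in> Cs R Y \<Longrightarrow> C' \<in> Cs R Y \<Longrightarrow> C \<noteq> C' \<Longrightarrow> C \<inter> C' = {}"
  unfolding Cs_def using cyl_eq by blast

lemma Cs_cover: "Y \<subseteq> \<Union>(Cs R Y)"
  unfolding Cs_def using cyl_self by blast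

lemma partition_sum:
  fixes \<nu> :: "(int \<Rightarrow> 'b::finite) measure"
  assumes s: "sets \<nu> = sets shift_borel" and fin: "finite_measure \<nu>"
    and Ys: "Y \<in> sets shift_borel" and null: "emeasure \<nu> (UNIV - Y) = 0"
    and D: "local_set R D"
  shows "(\<Sum>C\<in>Cs R Y. measure \<nu> C * indicator D (yC Y C)) = measure \<nu> D"
proof -
  interpret finite_measure \<nu> by fact
  have Cs_sets: "\<And>C. C \<in> Cs R Y \<Longrightarrow> C \<in> sets \<nu>"
    using s local_sets[OF local_set_cyl] unfolding Cs_def by auto
  have Ds: "D \<in> sets \<nu>" using s local_sets[OF D] by simp
  have DC: "\<And>C. C \<in> Cs R Y \<Longrightarrow> D \<inter> C = (if yC Y C \<in> D then C else {})"
  proof -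
    fix C assume C: "C \<in> Cs R Y"
    have "\<And>z. z \<in> C \<Longrightarrow> z \<in> D \<longleftrightarrow> yC Y C \<in> D"
      using Cs_yC[OF C] D unfolding local_set_def cyl_def by blast
    then show "D \<inter> C = (if yC Y C \<in> D then C else {})" by auto
  qed
  have "(\<Sum>C\<in>Cs R Y. measure \<nu> C * indicator D (yC Y C)) = (\<Sum>C\<in>Cs R Y. measure \<nu> (D \<inter> C))"
    by (intro sum.cong refl) (simp add: DC indicator_def)
  also have "\<dots> = measure \<nu> (\<Union>C\<in>Cs R Y. D \<inter> C)"
  proof (intro finite_measure_finite_Union[symmetric])
    show "disjoint_family_on (\<lambda>C. D \<inter> C) (Cs R Y)"
      unfolding disjoint_family_on_def using Cs_disjoint[of _ R Y] by blast
  qed (use finite_Cs Cs_sets Ds in auto)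
  also have "(\<Union>C\<in>Cs R Y. D \<inter> C) = D - (UNIV - \<Union>(Cs R Y))" by blast
  also have "measure \<nu> (D - (UNIV - \<Union>(Cs R Y))) = measure \<nu> D"
  proof -
    have "UNIV - \<Union>(Cs R Y) \<in> null_sets \<nu>"
    proof -
      have U: "\<Union>(Cs R Y) \<in> sets \<nu>" using finite_Cs Cs_sets by (intro sets.finite_Union) auto
      have "UNIV - \<Union>(Cs R Y) \<in> sets \<nu>" using U sets.compl_sets[OF U] sets_eq_imp_space_eq[OF s] by simp
      moreover have "emeasure \<nu> (UNIV - \<Union>(Cs R Y)) \<le> emeasure \<nu> (UNIV - Y)"
        using Cs_cover[of Y R] Ys s sets.compl_sets[of Y shift_borel]
        by (intro emeasure_mono) auto
      ultimately show ?thesis using null by (auto simp: null_sets_def)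
    qed
    then show ?thesis using Ds by (simp add: measure_def emeasure_Diff_null_set)
  qed
  finally show ?thesis .
qed

lemma Lmax_pos: "non_erasing \<sigma> \<Longrightarrow> 1 \<le> Lmax (\<sigma> :: 'a::finite \<Rightarrow> 'b list)"
proof -
  assume ne: "non_erasing \<sigma>"
  have "0 < length (\<sigma> undefined)" by (rule len_pos[OF ne])
  then show ?thesis using len_le_Lmax[of \<sigma> undefined] by linarith
qed

definition Mof :: "('a \<Rightarrow> 'b list) \<Rightarrow> (int \<Rightarrow> 'a) \<Rightarrow> nat \<Rightarrow> nat \<Rightarrow> nat" where
  "Mof \<sigma> x k N = (LEAST M. N + k \<le> nat (cumlen \<sigma> x (int M)))"

lemma Mof_ge:
  assumes ne: "non_erasing \<sigma>"
  shows "N + k \<le> nat (cumlen \<sigma> x (int (Mof \<sigma> x k N)))"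
proof -
  have "N + k \<le> nat (cumlen \<sigma> x (int (N + k)))"
    using cumlen_ge_id[OF ne, of "int (N + k)" x] by simp
  then show ?thesis unfolding Mof_def by (rule LeastI)
qed

lemma Mof_lt:
  fixes \<sigma> :: "'a::finite \<Rightarrow> 'b list"
  assumes ne: "non_erasing \<sigma>"
  shows "nat (cumlen \<sigma> x (int (Mof \<sigma> x k N))) < N + k + Lmax \<sigma>"
proof (cases "Mof \<sigma> x k N")
  case 0
  then have "N + k \<le> 0" using Mof_ge[OF ne, of N k x] by simp
  then show ?thesis using 0 Lmax_pos[OF ne] by simp
next
  case (Suc M1)
  have "\<not> N + k \<le> nat (cumlen \<sigma> x (int M1))"
  proof
    assume "N + k \<le> nat (cumlen \<sigma> x (int M1))"
    then have "Mof \<sigma> x k N \<le> M1" unfolding Mof_def by (rule Least_le)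
    then show False using Suc by simp
  qed
  moreover have "cumlen \<sigma> x (int (Suc M1)) = cumlen \<sigma> x (int M1 + 1)" by (simp add: add.commute)
  moreover have "cumlen \<sigma> x (int M1 + 1) = cumlen \<sigma> x (int M1) + ell \<sigma> x (int M1 + 1)"
    using cumlen_step[of \<sigma> x "int M1 + 1"] by simp
  moreover have "ell \<sigma> x (int M1 + 1) \<le> int (Lmax \<sigma>)" using len_le_Lmax[of \<sigma>] by simp
  moreover have "cumlen \<sigma> x (int M1) \<ge> 0" using cumlen_ge_id[OF ne, of "int M1" x] by simp
  ultimately have "cumlen \<sigma> x (int (Suc M1)) < int (N + k + Lmax \<sigma>)" by linarith
  moreover have "cumlen \<sigma> x (int (Suc M1)) \<ge> 0" using cumlen_ge_id[OF ne, of "int (Suc M1)" x] by simp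
  ultimately have "nat (cumlen \<sigma> x (int (Suc M1))) < N + k + Lmax \<sigma>" by (simp add: nat_less_iff)
  then show ?thesis using Suc by simp
qed

lemma Mof_le:
  fixes \<sigma> :: "'a::finite \<Rightarrow> 'b list"
  assumes ne: "non_erasing \<sigma>"
  shows "Mof \<sigma> x k N < N + k + Lmax \<sigma>"
  using Mof_lt[OF ne, of x k N] cumlen_ge_id[OF ne, of "int (Mof \<sigma> x k N)" x] by linarith

definition apx :: "('a \<Rightarrow> 'b list) \<Rightarrow> 'i set \<Rightarrow> ('i \<Rightarrow> real) \<Rightarrow> ('i \<Rightarrow> int \<Rightarrow> 'a) \<Rightarrow> ('i \<Rightarrow> nat)
    \<Rightarrow> nat \<Rightarrow> (int \<Rightarrow> 'a) set \<Rightarrow> real" where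
  "apx \<sigma> I w x k N A = (\<Sum>i\<in>I. w i * (\<Sum>m<Mof \<sigma> (x i) (k i) N. indicator A ((shift ^^ m) (x i)))) / real N"

lemma apx_nonneg: "(\<And>i. i \<in> I \<Longrightarrow> 0 \<le> w i) \<Longrightarrow> 0 \<le> apx \<sigma> I w x k N A"
  unfolding apx_def by (intro divide_nonneg_nonneg sum_nonneg mult_nonneg_nonneg sum_nonneg) auto

lemma apx_le:
  fixes \<sigma> :: "'a::finite \<Rightarrow> 'b list"
  assumes ne: "non_erasing \<sigma>" and w: "\<And>i. i \<in> I \<Longrightarrow> 0 \<le> w i" and k: "\<And>i. i \<in> I \<Longrightarrow> k i \<le> Lmax \<sigma>"
    and N: "1 \<le> N"
  shows "apx \<sigma> I w x k N A \<le> (\<Sum>i\<in>I. w i) * (1 + 2 * real (Lmax \<sigma>))"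
proof -
  have "(\<Sum>i\<in>I. w i * (\<Sum>m<Mof \<sigma> (x i) (k i) N. indicator A ((shift ^^ m) (x i)))) \<le> (\<Sum>i\<in>I. w i * (real N * (1 + 2 * real (Lmax \<sigma>))))"
  proof (intro sum_mono mult_left_mono w)
    fix i assume i: "i \<in> I"
    have "(\<Sum>m<Mof \<sigma> (x i) (k i) N. indicator A ((shift ^^ m) (x i)) :: real) \<le> (\<Sum>m<Mof \<sigma> (x i) (k i) N. 1)"
      by (intro sum_mono) (simp add: indicator_def)
    also have "\<dots> = real (Mof \<sigma> (x i) (k i) N)" by simp
    also have "\<dots> \<le> real N + real (k i) + real (Lmax \<sigma>)" using Mof_le[OF ne, of "x i" "k i" N] by simp
    also have "\<dots> \<le> real N * (1 + 2 * real (Lmax \<sigma>))"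
    proof -
      have "real (Lmax \<sigma>) \<le> real N * real (Lmax \<sigma>)" using N by (simp add: mult_le_cancel_right1)
      moreover have "real (k i) \<le> real (Lmax \<sigma>)" using k[OF i] by simp
      ultimately show ?thesis by (simp add: algebra_simps)
    qed
    finally show "(\<Sum>m<Mof \<sigma> (x i) (k i) N. indicator A ((shift ^^ m) (x i))) \<le> real N * (1 + 2 * real (Lmax \<sigma>))" .
  qed
  also have "(\<Sum>i\<in>I. w i * (real N * (1 + 2 * real (Lmax \<sigma>)))) = real N * ((\<Sum>i\<in>I. w i) * (1 + 2 * real (Lmax \<sigma>)))"
    by (simp add: sum_distrib_left sum_distrib_right mult_ac)
  finally show ?thesis unfolding apx_def using N
    by (simp add: divide_le_eq mult.commute)
qed

lemma apx_add:
  assumes "A \<inter> B = {}"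
  shows "apx \<sigma> I w x k N (A \<union> B) = apx \<sigma> I w x k N A + apx \<sigma> I w x k N B"
proof -
  have "\<And>z. indicator (A \<union> B) z = (indicator A z + indicator B z :: real)"
    using assms by (auto simp: indicator_def)
  then show ?thesis unfolding apx_def by (simp add: sum.distrib distrib_left add_divide_distrib)
qed

lemma apx_shift:
  assumes w: "\<And>i. i \<in> I \<Longrightarrow> 0 \<le> w i" and N: "1 \<le> N"
  shows "\<bar>apx \<sigma> I w x k N (shift -` A) - apx \<sigma> I w x k N A\<bar> \<le> (\<Sum>i\<in>I. w i) / real N"
proof -
  let ?M = "\<lambda>i. Mof \<sigma> (x i) (k i) N"
  let ?f = "\<lambda>i m. indicator A ((shift ^^ m) (x i)) :: real"
  have tel: "(\<Sum>m<?M i. indicator (shift -` A) ((shift ^^ m) (x i))) - (\<Sum>m<?M i. ?f i m) = ?f i (?M i) - ?f i 0" for i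
  proof -
    have "(\<Sum>m<?M i. indicator (shift -` A) ((shift ^^ m) (x i)) :: real) = (\<Sum>m<?M i. ?f i (Suc m))"
      by (intro sum.cong) (auto simp: indicator_def)
    then show ?thesis using sum_lessThan_telescope[of "?f i" "?M i"] by (simp add: sum_subtractf)
  qed
  have "apx \<sigma> I w x k N (shift -` A) - apx \<sigma> I w x k N A
     = (\<Sum>i\<in>I. w i * (\<Sum>m<?M i. indicator (shift -` A) ((shift ^^ m) (x i))) - w i * (\<Sum>m<?M i. ?f i m)) / real N"
    unfolding apx_def by (simp add: diff_divide_distrib sum_subtractf)
  also have "\<dots> = (\<Sum>i\<in>I. w i * (?f i (?M i) - ?f i 0)) / real N"
    by (intro arg_cong[where f="\<lambda>t. t / real N"] sum.cong refl) (metis tel right_diff_distrib)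
  also have "\<bar>\<dots>\<bar> \<le> (\<Sum>i\<in>I. w i) / real N"
  proof -
    have "\<bar>\<Sum>i\<in>I. w i * (?f i (?M i) - ?f i 0)\<bar> \<le> (\<Sum>i\<in>I. \<bar>w i * (?f i (?M i) - ?f i 0)\<bar>)" by (rule sum_abs)
    also have "\<dots> \<le> (\<Sum>i\<in>I. w i)"
    proof (intro sum_mono)
      fix i assume "i \<in> I"
      then show "\<bar>w i * (?f i (?M i) - ?f i 0)\<bar> \<le> w i" using w[of i]
        by (auto simp: abs_mult indicator_def)
    qed
    finally show ?thesis using N by (simp add: divide_right_mono)
  qed
  finally show ?thesis .
qed

lemma apx_null:
  assumes X: "subshift X" and x: "\<And>i. i \<in> I \<Longrightarrow> x i \<in> X" and A: "A \<inter> X = {}"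
  shows "apx \<sigma> I w x k N A = 0"
proof -
  have "\<And>i m. i \<in> I \<Longrightarrow> (shift ^^ m) (x i) \<notin> A" using subshift_shift_pow[OF X x] A by blast
  then show ?thesis unfolding apx_def by simp
qed

lemma real_blocks:
  fixes \<sigma> :: "'a::finite \<Rightarrow> 'b list"
  assumes ne: "non_erasing \<sigma>"
  shows "(\<Sum>k'<Lmax \<sigma>. \<Sum>m<M. indicator (Ek \<sigma> k' B) ((shift ^^ m) x) :: real)
       = (\<Sum>t<nat (cumlen \<sigma> x (int M)). indicator B ((shift ^^ t) (subst_seq \<sigma> x)))"
proof -
  have "ennreal (\<Sum>k'<Lmax \<sigma>. \<Sum>m<M. indicator (Ek \<sigma> k' B) ((shift ^^ m) x))
      = (\<Sum>k'<Lmax \<sigma>. ennreal (\<Sum>m<M. indicator (Ek \<sigma> k' B) ((shift ^^ m) x)))"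
    by (rule sum_ennreal[symmetric]) (simp add: sum_nonneg)
  also have "\<dots> = (\<Sum>k'<Lmax \<sigma>. \<Sum>m<M. ennreal (indicator (Ek \<sigma> k' B) ((shift ^^ m) x)))"
    by (intro sum.cong refl sum_ennreal[symmetric]) simp
  also have "\<dots> = (\<Sum>k'<Lmax \<sigma>. \<Sum>m<M. indicator (Ek \<sigma> k' B) ((shift ^^ m) x))"
    by (simp add: ennreal_indicator)
  also have "\<dots> = (\<Sum>m<M. \<Sum>k'<Lmax \<sigma>. indicator (Ek \<sigma> k' B) ((shift ^^ m) x))" by (rule sum.swap)
  also have "\<dots> = (\<Sum>m<M. push_count \<sigma> B ((shift ^^ m) x))" by (simp add: push_count_Ek)
  also have "\<dots> = (\<Sum>t<nat (cumlen \<sigma> x (int M)). indicator B ((shift ^^ t) (subst_seq \<sigma> x)))"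
    by (rule push_count_blocks[OF ne])
  also have "\<dots> = (\<Sum>t<nat (cumlen \<sigma> x (int M)). ennreal (indicator B ((shift ^^ t) (subst_seq \<sigma> x))))"
    by (simp add: ennreal_indicator)
  also have "\<dots> = ennreal (\<Sum>t<nat (cumlen \<sigma> x (int M)). indicator B ((shift ^^ t) (subst_seq \<sigma> x)))"
    by (rule sum_ennreal) simp
  finally show ?thesis by (simp add: sum_nonneg)
qed

lemma window_diff:
  fixes f :: "nat \<Rightarrow> real"
  assumes f: "\<And>t. 0 \<le> f t" "\<And>t. f t \<le> 1" and kC: "k + N \<le> C" and C: "C \<le> k + N + D"
  shows "0 \<le> (\<Sum>t<C. f t) - (\<Sum>t\<in>{k..<k+N}. f t)" "(\<Sum>t<C. f t) - (\<Sum>t\<in>{k..<k+N}. f t) \<le> real (k + D)"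
proof -
  have sub: "{k..<k+N} \<subseteq> {..<C}" using kC by auto
  have eq: "(\<Sum>t<C. f t) - (\<Sum>t\<in>{k..<k+N}. f t) = (\<Sum>t\<in>{..<C} - {k..<k+N}. f t)"
    using sum_diff[OF _ sub, of f] by simp
  show "0 \<le> (\<Sum>t<C. f t) - (\<Sum>t\<in>{k..<k+N}. f t)" unfolding eq by (intro sum_nonneg f)
  have "(\<Sum>t\<in>{..<C} - {k..<k+N}. f t) \<le> (\<Sum>t\<in>{..<C} - {k..<k+N}. 1)" by (intro sum_mono f)
  also have "\<dots> = real (card ({..<C} - {k..<k+N}))" by simp
  also have "card ({..<C} - {k..<k+N}) = C - N" using card_Diff_subset[OF _ sub] by simp
  also have "real (C - N) \<le> real (k + D)" using C by simp
  finally show "(\<Sum>t<C. f t) - (\<Sum>t\<in>{k..<k+N}. f t) \<le> real (k + D)" unfolding eq .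
qed

lemma apx_Ek:
  fixes \<sigma> :: "'a::finite \<Rightarrow> 'b list"
  assumes ne: "non_erasing \<sigma>" and w: "\<And>i. i \<in> I \<Longrightarrow> 0 \<le> w i"
    and k: "\<And>i. i \<in> I \<Longrightarrow> k i < Lmax \<sigma>" and N: "1 \<le> N"
  shows "\<bar>(\<Sum>k'<Lmax \<sigma>. apx \<sigma> I w x k N (Ek \<sigma> k' B))
      - (\<Sum>i\<in>I. w i * (\<Sum>j<N. indicator B ((shift ^^ j) (gk \<sigma> (k i) (x i))))) / real N\<bar>
     \<le> 2 * real (Lmax \<sigma>) * (\<Sum>i\<in>I. w i) / real N"
proof -
  let ?M = "\<lambda>i. Mof \<sigma> (x i) (k i) N"
  let ?C = "\<lambda>i. nat (cumlen \<sigma> (x i) (int (?M i)))"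
  let ?f = "\<lambda>i t. indicator B ((shift ^^ t) (subst_seq \<sigma> (x i))) :: real"
  have S1: "(\<Sum>k'<Lmax \<sigma>. apx \<sigma> I w x k N (Ek \<sigma> k' B)) = (\<Sum>i\<in>I. w i * (\<Sum>t<?C i. ?f i t)) / real N"
  proof -
    have "(\<Sum>k'<Lmax \<sigma>. apx \<sigma> I w x k N (Ek \<sigma> k' B))
        = (\<Sum>k'<Lmax \<sigma>. \<Sum>i\<in>I. w i * (\<Sum>m<?M i. indicator (Ek \<sigma> k' B) ((shift ^^ m) (x i)))) / real N"
      unfolding apx_def by (simp add: sum_divide_distrib)
    also have "(\<Sum>k'<Lmax \<sigma>. \<Sum>i\<in>I. w i * (\<Sum>m<?M i. indicator (Ek \<sigma> k' B) ((shift ^^ m) (x i))))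
        = (\<Sum>i\<in>I. w i * (\<Sum>k'<Lmax \<sigma>. \<Sum>m<?M i. indicator (Ek \<sigma> k' B) ((shift ^^ m) (x i))))"
      by (subst sum.swap) (simp add: sum_distrib_left)
    also have "\<dots> = (\<Sum>i\<in>I. w i * (\<Sum>t<?C i. ?f i t))"
      by (simp add: real_blocks[OF ne])
    finally show ?thesis .
  qed
  have S2: "(\<Sum>j<N. indicator B ((shift ^^ j) (gk \<sigma> (k i) (x i))) :: real) = (\<Sum>t\<in>{k i..<k i+N}. ?f i t)" for i
  proof -
    have "(\<Sum>t\<in>{k i..<k i+N}. ?f i t) = (\<Sum>j<N. ?f i (j + k i))"
    proof -
      have "(\<lambda>j. j + k i) ` {..<N} = {k i..<k i+N}"
      proof
        show "{k i..<k i+N} \<subseteq> (\<lambda>j. j + k i) ` {..<N}"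
        proof
          fix t assume "t \<in> {k i..<k i+N}"
          then have "t = (t - k i) + k i" "t - k i < N" by auto
          then show "t \<in> (\<lambda>j. j + k i) ` {..<N}" by blast
        qed
      qed auto
      moreover have "inj_on (\<lambda>j. j + k i) {..<N}" by (simp add: inj_on_def)
      ultimately show ?thesis using sum.reindex[of "\<lambda>j. j + k i" "{..<N}" "?f i"] by simp
    qed
    then show ?thesis by (simp add: gk_def funpow_add)
  qed
  have D: "0 \<le> (\<Sum>t<?C i. ?f i t) - (\<Sum>t\<in>{k i..<k i+N}. ?f i t) \<and>
       (\<Sum>t<?C i. ?f i t) - (\<Sum>t\<in>{k i..<k i+N}. ?f i t) \<le> 2 * real (Lmax \<sigma>)" if i: "i \<in> I" for i
  proof -
    have a: "k i + N \<le> ?C i" using Mof_ge[OF ne, of N "k i" "x i"] by simp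
    have b: "?C i \<le> k i + N + Lmax \<sigma>" using Mof_lt[OF ne, of "x i" "k i" N] by simp
    have f: "\<And>t. 0 \<le> ?f i t" "\<And>t. ?f i t \<le> 1" by (simp_all add: indicator_def)
    note wd = window_diff[of "?f i", OF f a b]
    have "real (k i + Lmax \<sigma>) \<le> 2 * real (Lmax \<sigma>)" using k[OF i] by simp
    then show ?thesis using wd by linarith
  qed
  have "\<bar>(\<Sum>i\<in>I. w i * (\<Sum>t<?C i. ?f i t)) - (\<Sum>i\<in>I. w i * (\<Sum>t\<in>{k i..<k i+N}. ?f i t))\<bar>
      \<le> 2 * real (Lmax \<sigma>) * (\<Sum>i\<in>I. w i)"
  proof -
    have "(\<Sum>i\<in>I. w i * (\<Sum>t<?C i. ?f i t)) - (\<Sum>i\<in>I. w i * (\<Sum>t\<in>{k i..<k i+N}. ?f i t))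
        = (\<Sum>i\<in>I. w i * ((\<Sum>t<?C i. ?f i t) - (\<Sum>t\<in>{k i..<k i+N}. ?f i t)))"
      by (simp add: sum_subtractf right_diff_distrib)
    moreover have "0 \<le> (\<Sum>i\<in>I. w i * ((\<Sum>t<?C i. ?f i t) - (\<Sum>t\<in>{k i..<k i+N}. ?f i t)))"
      using D w by (intro sum_nonneg mult_nonneg_nonneg) auto
    moreover have "(\<Sum>i\<in>I. w i * ((\<Sum>t<?C i. ?f i t) - (\<Sum>t\<in>{k i..<k i+N}. ?f i t)))
        \<le> (\<Sum>i\<in>I. w i * (2 * real (Lmax \<sigma>)))"
      using D w by (intro sum_mono mult_left_mono) auto
    ultimately show ?thesis by (simp add: sum_distrib_right[symmetric] mult.commute)
  qed
  then show ?thesis using N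
    by (simp add: S1 S2 diff_divide_distrib[symmetric] divide_right_mono)
qed

lemma lim_close:
  fixes X :: "nat \<Rightarrow> real"
  assumes X: "X \<longlonglongrightarrow> L" and b: "\<And>k. k \<ge> kk \<Longrightarrow> \<bar>X k - c\<bar> \<le> C / real (Suc k)"
  shows "L = c"
proof -
  have g: "(\<lambda>k. C / real (Suc k)) \<longlonglongrightarrow> 0"
    using tendsto_mult[OF tendsto_const[of C] LIMSEQ_inverse_real_of_nat] by (simp add: divide_inverse)
  have "eventually (\<lambda>k. norm (X k - c) \<le> C / real (Suc k)) sequentially"
    using b by (auto simp: eventually_sequentially)
  then have "(\<lambda>k. X k - c) \<longlonglongrightarrow> 0" by (rule Lim_null_comparison[OF _ g])
  then have "X \<longlonglongrightarrow> c" by (simp add: LIM_zero_iff)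
  then show ?thesis using X LIMSEQ_unique by blast
qed

lemma local_shift_pow_preimage:
  assumes "local_set r B" shows "local_set (r + j) ((shift ^^ j) -` B)"
  unfolding local_set_def
proof (intro allI impI)
  fix x y :: "int \<Rightarrow> 'a" assume "agree (r + j) x y"
  then have "agree r ((shift ^^ j) x) ((shift ^^ j) y)" by (auto simp: agree_def shift_pow_apply)
  then show "(x \<in> (shift ^^ j) -` B) = (y \<in> (shift ^^ j) -` B)" using assms unfolding local_set_def by auto
qed

lemma shift_pow_sets: "B \<in> sets shift_borel \<Longrightarrow> (shift ^^ j) -` B \<in> sets shift_borel"
  using measurable_sets[OF ulocal_measurable[OF ulocal_shift_pow] ] by simp

lemma inv_shift_pow:
  assumes inv: "\<forall>B\<in>sets shift_borel. emeasure \<nu> (shift -` B) = emeasure \<nu> B"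
    and B: "B \<in> sets shift_borel"
  shows "emeasure \<nu> ((shift ^^ j) -` B) = emeasure \<nu> B"
proof (induction j)
  case 0 then show ?case by simp
next
  case (Suc j)
  have "(shift ^^ Suc j) -` B = shift -` ((shift ^^ j) -` B)" by (simp only: funpow_Suc_right vimage_comp)
  then have "emeasure \<nu> ((shift ^^ Suc j) -` B) = emeasure \<nu> (shift -` ((shift ^^ j) -` B))" by simp
  also have "\<dots> = emeasure \<nu> ((shift ^^ j) -` B)" using inv shift_pow_sets[OF B, of j] by blast
  also have "\<dots> = emeasure \<nu> B" by (rule Suc.IH)
  finally show ?case .
qed

lemma countable_Loc: "countable (Loc :: (int \<Rightarrow> 'a::finite) set set)"
proof -
  have fin: "finite {A :: (int \<Rightarrow> 'a) set. local_set n A}" for n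
  proof -
    have "{A :: (int \<Rightarrow> 'a) set. local_set n A} \<subseteq> Union ` Pow (Cs n UNIV)"
    proof
      fix A :: "(int \<Rightarrow> 'a) set" assume A: "A \<in> {A. local_set n A}"
      have "A = \<Union>{cyl n y | y. y \<in> A}"
        using A cyl_self unfolding local_set_def cyl_def by blast
      moreover have "{cyl n y | y. y \<in> A} \<subseteq> Cs n UNIV" unfolding Cs_def by blast
      ultimately show "A \<in> Union ` Pow (Cs n UNIV)" by blast
    qed
    moreover have "finite (Union ` Pow (Cs n (UNIV :: (int \<Rightarrow> 'a) set)))" using finite_Cs[of n "UNIV :: (int \<Rightarrow> 'a) set"] by simp
    ultimately show ?thesis using finite_subset by blast
  qed
  have "Loc = (\<Union>n. {A :: (int \<Rightarrow> 'a) set. local_set n A})" unfolding Loc_def by blast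
  moreover have "countable (\<Union>n. {A :: (int \<Rightarrow> 'a) set. local_set n A})"
    by (intro countable_UN) (auto intro: countable_finite fin)
  ultimately show ?thesis by simp
qed

lemma Loc_compact_finite:
  fixes A :: "nat \<Rightarrow> (int \<Rightarrow> 'a::finite) set"
  assumes A: "range A \<subseteq> Loc" and disj: "disjoint_family A" and U: "(\<Union>i. A i) \<in> Loc"
  shows "\<exists>n. \<forall>i\<ge>n. A i = {}"
proof -
  obtain r where r: "local_set r (\<Union>i. A i)" using U unfolding Loc_def by blast
  have "compactin shift_top (\<Union>i. A i)"
    by (rule closedin_compact_space[OF compact_shift_top closedin_local[OF r]])
  moreover have "\<forall>U\<in>range A. openin shift_top U"
    using A unfolding Loc_def by (auto intro: openin_local)
  ultimately obtain F where F: "finite F" "F \<subseteq> range A" "(\<Union>i. A i) \<subseteq> \<Union>F"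
    unfolding compactin_def by (metis order_refl)
  obtain J where J: "J \<subseteq> UNIV" "finite J" "F = A ` J" using finite_subset_image[OF F(1) F(2)] by blast
  define n where "n = Suc (Max (insert 0 J))"
  have "A i = {}" if "i \<ge> n" for i
  proof (rule ccontr)
    assume "A i \<noteq> {}"
    then obtain z where z: "z \<in> A i" by blast
    then obtain j where j: "j \<in> J" "z \<in> A j" using F(3) J(3) by blast
    have "j \<le> Max (insert 0 J)" using j J(2) by simp
    then have "j \<noteq> i" using that n_def by simp
    then show False using disj z j unfolding disjoint_family_on_def by blast
  qed
  then show ?thesis by blast
qed

locale surj_setup =
  fixes \<sigma> :: "'a::finite \<Rightarrow> 'b::finite list" and X :: "(int \<Rightarrow> 'a) set" and \<nu> :: "(int \<Rightarrow> 'b) measure"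
  assumes ne: "non_erasing \<sigma>" and X: "subshift X" and \<nu>: "\<nu> \<in> inv_measures (generated_subshift \<sigma> X)"
begin

abbreviation "Y \<equiv> generated_subshift \<sigma> X"

lemma \<nu>_sets: "sets \<nu> = sets shift_borel" and \<nu>_fin: "finite_measure \<nu>"
  and \<nu>_inv: "\<forall>B\<in>sets shift_borel. emeasure \<nu> (shift -` B) = emeasure \<nu> B"
  and \<nu>_null: "emeasure \<nu> (UNIV - Y) = 0"
  using \<nu> unfolding inv_measures_def by auto

lemma Ys: "Y \<in> sets shift_borel" by (rule subshift_sets[OF gen_subshift(1)])

definition dsub :: "(int \<Rightarrow> 'b) \<Rightarrow> (int \<Rightarrow> 'a) \<times> nat" where
  "dsub y = (SOME p. fst p \<in> X \<and> snd p < length (\<sigma> (fst p 1)) \<and> y = gk \<sigma> (snd p) (fst p))"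

definition xs :: "(int \<Rightarrow> 'b) set \<Rightarrow> (int \<Rightarrow> 'a)" where "xs C = fst (dsub (yC Y C))"
definition ks :: "(int \<Rightarrow> 'b) set \<Rightarrow> nat" where "ks C = snd (dsub (yC Y C))"

lemma dsub: assumes "y \<in> Y"
  shows "fst (dsub y) \<in> X \<and> snd (dsub y) < length (\<sigma> (fst (dsub y) 1)) \<and> y = gk \<sigma> (snd (dsub y)) (fst (dsub y))"
proof -
  obtain x k where "x \<in> X \<and> k < length (\<sigma> (x 1)) \<and> y = gk \<sigma> k x"
    using gen_char[OF ne X assms] by blast
  then have "\<exists>p. fst p \<in> X \<and> snd p < length (\<sigma> (fst p 1)) \<and> y = gk \<sigma> (snd p) (fst p)"
    by (intro exI[of _ "(x, k)"]) simp
  then show ?thesis unfolding dsub_def by (rule someI_ex)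
qed

lemma xs: "C \<in> Cs R Y \<Longrightarrow> xs C \<in> X"
  and ks: "C \<in> Cs R Y \<Longrightarrow> ks C < length (\<sigma> (xs C 1))"
  and yC_gk: "C \<in> Cs R Y \<Longrightarrow> yC Y C = gk \<sigma> (ks C) (xs C)"
  using dsub[of "yC Y C"] yC[of C R Y] unfolding xs_def ks_def by auto

lemma ks_Lmax: "C \<in> Cs R Y \<Longrightarrow> ks C < Lmax \<sigma>"
  using ks[of C R] len_le_Lmax[of \<sigma> "xs C 1"] by linarith

abbreviation "W \<equiv> measure \<nu> UNIV"

lemma sum_w: "(\<Sum>C\<in>Cs R Y. measure \<nu> C) = W"
  using partition_sum[OF \<nu>_sets \<nu>_fin Ys \<nu>_null, of R UNIV] by simp

lemma W_nonneg: "0 \<le> W" by simp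

definition a :: "nat \<Rightarrow> (int \<Rightarrow> 'a) set \<Rightarrow> real" where
  "a n A = apx \<sigma> (Cs (2 * Suc n) Y) (\<lambda>C. measure \<nu> C) xs ks (Suc n) A"

lemma a_nonneg: "0 \<le> a n A"
  unfolding a_def by (rule apx_nonneg) simp

lemma a_le: "a n A \<le> W * (1 + 2 * real (Lmax \<sigma>))"
  unfolding a_def using apx_le[OF ne, of "Cs (2 * Suc n) Y" "\<lambda>C. measure \<nu> C" ks "Suc n" xs A]
    ks_Lmax sum_w by (simp add: less_imp_le)

lemma a_add: "A \<inter> B = {} \<Longrightarrow> a n (A \<union> B) = a n A + a n B"
  unfolding a_def by (rule apx_add)

lemma a_shift: "\<bar>a n (shift -` A) - a n A\<bar> \<le> W / real (Suc n)"
  unfolding a_def using apx_shift[of "Cs (2 * Suc n) Y" "\<lambda>C. measure \<nu> C" "Suc n" \<sigma> xs ks A] sum_w by simp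

lemma a_null: "A \<inter> X = {} \<Longrightarrow> a n A = 0"
  unfolding a_def by (rule apx_null[OF X]) (use xs in auto)

lemma a_Ek:
  assumes B: "local_set r B" and r: "r \<le> Suc n"
  shows "\<bar>(\<Sum>k'<Lmax \<sigma>. a n (Ek \<sigma> k' B)) - measure \<nu> B\<bar> \<le> 2 * real (Lmax \<sigma>) * W / real (Suc n)"
proof -
  let ?I = "Cs (2 * Suc n) Y" and ?w = "\<lambda>C. measure \<nu> C"
  have Bs: "B \<in> sets shift_borel" by (rule local_sets[OF B])
  have "(\<Sum>C\<in>?I. ?w C * (\<Sum>j<Suc n. indicator B ((shift ^^ j) (gk \<sigma> (ks C) (xs C)))))
      = (\<Sum>C\<in>?I. \<Sum>j<Suc n. ?w C * indicator ((shift ^^ j) -` B) (yC Y C))"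
    unfolding sum_distrib_left
  proof (intro sum.cong refl)
    fix C j assume "C \<in> ?I"
    then show "?w C * indicator B ((shift ^^ j) (gk \<sigma> (ks C) (xs C))) = ?w C * indicator ((shift ^^ j) -` B) (yC Y C)"
      using yC_gk by (simp add: indicator_def)
  qed
  also have "\<dots> = (\<Sum>j<Suc n. \<Sum>C\<in>?I. ?w C * indicator ((shift ^^ j) -` B) (yC Y C))"
    by (rule sum.swap)
  also have "\<dots> = (\<Sum>j<Suc n. measure \<nu> ((shift ^^ j) -` B))"
  proof (intro sum.cong refl partition_sum[OF \<nu>_sets \<nu>_fin Ys \<nu>_null])
    fix j assume "j \<in> {..<Suc n}"
    then have "r + j \<le> 2 * Suc n" using r by simp
    then show "local_set (2 * Suc n) ((shift ^^ j) -` B)"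
      using local_set_mono[OF local_shift_pow_preimage[OF B]] by blast
  qed
  also have "\<dots> = (\<Sum>j<Suc n. measure \<nu> B)"
    using inv_shift_pow[OF \<nu>_inv Bs] by (simp add: measure_def)
  also have "\<dots> = real (Suc n) * measure \<nu> B" by simp
  finally have eq: "(\<Sum>C\<in>?I. ?w C * (\<Sum>j<Suc n. indicator B ((shift ^^ j) (gk \<sigma> (ks C) (xs C))))) / real (Suc n)
      = measure \<nu> B" by simp
  show ?thesis
    using apx_Ek[OF ne, of ?I ?w ks "Suc n" xs B] ks_Lmax sum_w eq unfolding a_def by simp
qed

end

context surj_setup
begin

definition enum :: "nat \<Rightarrow> (int \<Rightarrow> 'a) set" where "enum = from_nat_into Loc"

lemma range_enum: "range enum = Loc"
proof -
  have "(UNIV :: (int \<Rightarrow> 'a) set) \<in> Loc" by simp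
  then have "(Loc :: (int \<Rightarrow> 'a) set set) \<noteq> {}" by blast
  then show ?thesis unfolding enum_def using countable_Loc by (intro range_from_nat_into) auto
qed

definition K where "K = W * (1 + 2 * real (Lmax \<sigma>))"

definition d :: "nat \<Rightarrow> nat" where
  "d = (SOME d. strict_mono d \<and> (\<forall>n. convergent (\<lambda>k. a (d k) (enum n))))"

lemma d: "strict_mono d \<and> (\<forall>n. convergent (\<lambda>k. a (d k) (enum n)))"
proof -
  have "\<exists>d. strict_mono (d::nat \<Rightarrow> nat) \<and> (\<forall>n. convergent (\<lambda>k. a (d k) (enum n)))"
  proof (rule diagonal_convergent[of "\<lambda>k n. a k (enum n)" K])
    fix n k show "\<bar>a k (enum n)\<bar> \<le> K" using a_nonneg a_le unfolding K_def by simp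
  qed
  then show ?thesis unfolding d_def by (rule someI_ex)
qed

lemma d_mono: "strict_mono d" using d by blast

lemma d_ge: "k \<le> d k" using seq_suble[OF d_mono] .

lemma conv: "A \<in> Loc \<Longrightarrow> convergent (\<lambda>k. a (d k) A)"
proof -
  assume "A \<in> Loc"
  then obtain n where "A = enum n" using range_enum by (metis imageE)
  then show ?thesis using d by simp
qed

definition wl :: "(int \<Rightarrow> 'a) set \<Rightarrow> real" where "wl A = lim (\<lambda>k. a (d k) A)"

lemma wl_lim: "A \<in> Loc \<Longrightarrow> (\<lambda>k. a (d k) A) \<longlonglongrightarrow> wl A"
  unfolding wl_def using conv convergent_LIMSEQ_iff by blast

lemma wl_nonneg: "A \<in> Loc \<Longrightarrow> 0 \<le> wl A"
  using wl_lim by (rule LIMSEQ_le_const) (use a_nonneg in auto)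

lemma wl_add: "A \<in> Loc \<Longrightarrow> B \<in> Loc \<Longrightarrow> A \<inter> B = {} \<Longrightarrow> wl (A \<union> B) = wl A + wl B"
proof -
  assume A: "A \<in> Loc" and B: "B \<in> Loc" and AB: "A \<inter> B = {}"
  have "(\<lambda>k. a (d k) (A \<union> B)) \<longlonglongrightarrow> wl A + wl B"
    using tendsto_add[OF wl_lim[OF A] wl_lim[OF B]] a_add[OF AB] by simp
  then show ?thesis using wl_lim[OF Loc_Un[OF A B]] LIMSEQ_unique by blast
qed

lemma Loc_empty: "{} \<in> Loc" by (auto simp: Loc_def)

lemma wl_empty: "wl {} = 0"
  using wl_add[OF Loc_empty Loc_empty] by simp

lemma wl_shift: "A \<in> Loc \<Longrightarrow> wl (shift -` A) = wl A"
proof -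
  assume A: "A \<in> Loc"
  have sA: "shift -` A \<in> Loc" by (rule ulocal_Loc[OF ulocal_shift A])
  have "wl (shift -` A) - wl A = 0"
  proof (rule lim_close)
    show "(\<lambda>k. a (d k) (shift -` A) - a (d k) A) \<longlonglongrightarrow> wl (shift -` A) - wl A"
      by (intro tendsto_diff wl_lim sA A)
    fix k :: nat assume "k \<ge> 0"
    have "\<bar>a (d k) (shift -` A) - a (d k) A\<bar> \<le> W / real (Suc (d k))" by (rule a_shift)
    also have "\<dots> \<le> W / real (Suc k)" using d_ge[of k] by (intro divide_left_mono) auto
    finally show "\<bar>a (d k) (shift -` A) - a (d k) A - 0\<bar> \<le> W / real (Suc k)" by simp
  qed
  then show ?thesis by simp
qed

lemma wl_null: "A \<in> Loc \<Longrightarrow> A \<inter> X = {} \<Longrightarrow> wl A = 0"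
proof -
  assume A: "A \<in> Loc" and AX: "A \<inter> X = {}"
  have "(\<lambda>k. a (d k) A) \<longlonglongrightarrow> 0" using a_null[OF AX] by simp
  then show ?thesis using wl_lim[OF A] LIMSEQ_unique by blast
qed

lemma wl_Ek: "B \<in> Loc \<Longrightarrow> (\<Sum>k'<Lmax \<sigma>. wl (Ek \<sigma> k' B)) = measure \<nu> B"
proof -
  assume B: "B \<in> Loc"
  then obtain r where r: "local_set r B" unfolding Loc_def by blast
  show ?thesis
  proof (rule lim_close[where kk = r])
    show "(\<lambda>k. \<Sum>k'<Lmax \<sigma>. a (d k) (Ek \<sigma> k' B)) \<longlonglongrightarrow> (\<Sum>k'<Lmax \<sigma>. wl (Ek \<sigma> k' B))"
      by (intro tendsto_sum wl_lim Ek_local[OF ne B])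
    fix k assume k: "r \<le> k"
    have "\<bar>(\<Sum>k'<Lmax \<sigma>. a (d k) (Ek \<sigma> k' B)) - measure \<nu> B\<bar> \<le> 2 * real (Lmax \<sigma>) * W / real (Suc (d k))"
      using k d_ge[of k] by (intro a_Ek[OF r]) simp
    also have "\<dots> \<le> 2 * real (Lmax \<sigma>) * W / real (Suc k)" using d_ge[of k] by (intro divide_left_mono) auto
    finally show "\<bar>(\<Sum>k'<Lmax \<sigma>. a (d k) (Ek \<sigma> k' B)) - measure \<nu> B\<bar> \<le> 2 * real (Lmax \<sigma>) * W / real (Suc k)" .
  qed
qed

lemma wl_finite_Un:
  fixes n :: nat
  assumes A: "\<And>i. A i \<in> Loc" and disj: "disjoint_family A"
  shows "(\<Union>i<n. A i) \<in> Loc \<and> wl (\<Union>i<n. A i) = (\<Sum>i<n. wl (A i))"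
proof (induction n)
  case 0 then show ?case using Loc_empty wl_empty by simp
next
  case (Suc n)
  have eq: "(\<Union>i<Suc n. A i) = (\<Union>i<n. A i) \<union> A n" by (auto simp: lessThan_Suc)
  have "\<And>i. i < n \<Longrightarrow> A i \<inter> A n = {}" using disj unfolding disjoint_family_on_def by auto
  then have "(\<Union>i<n. A i) \<inter> A n = {}" by blast
  have L: "(\<Union>i<n. A i) \<in> Loc" using Suc by blast
  moreover have "(\<Union>i<n. A i) \<union> A n \<in> Loc" by (rule Loc_Un[OF L A])
  moreover have "wl ((\<Union>i<n. A i) \<union> A n) = wl (\<Union>i<n. A i) + wl (A n)" by (rule wl_add[OF L A]) fact
  ultimately show ?case using Suc eq by simp
qed

definition f :: "(int \<Rightarrow> 'a) set \<Rightarrow> ennreal" where "f A = ennreal (wl A)"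

lemma f_pos: "positive Loc f"
  unfolding positive_def f_def by (simp add: wl_empty)

lemma f_ca: "countably_additive Loc f"
  unfolding countably_additive_def
proof (intro allI impI)
  fix A :: "nat \<Rightarrow> (int \<Rightarrow> 'a) set"
  assume A: "range A \<subseteq> Loc" "disjoint_family A" "\<Union> (range A) \<in> Loc"
  obtain n where n: "\<And>i. i \<ge> n \<Longrightarrow> A i = {}" using Loc_compact_finite[OF A] by blast
  have "(\<Sum>i. f (A i)) = (\<Sum>i\<in>{..<n}. f (A i))"
    by (rule suminf_finite) (auto simp: n f_def wl_empty)
  also have "\<dots> = ennreal (\<Sum>i<n. wl (A i))" unfolding f_def using A(1) wl_nonneg by (intro sum_ennreal) auto
  also have "(\<Sum>i<n. wl (A i)) = wl (\<Union>i<n. A i)"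
  proof -
    have "\<And>i. A i \<in> Loc" using A(1) by auto
    then show ?thesis using wl_finite_Un[of A n] A(2) by simp
  qed
  also have "(\<Union>i<n. A i) = \<Union> (range A)"
  proof
    show "\<Union> (range A) \<subseteq> (\<Union>i<n. A i)"
    proof
      fix x assume "x \<in> \<Union> (range A)"
      then obtain i where "x \<in> A i" by blast
      then show "x \<in> (\<Union>i<n. A i)" using n[of i] by (cases "i < n") auto
    qed
  qed auto
  finally show "(\<Sum>i. f (A i)) = f (\<Union> (range A))" by (simp add: f_def)
qed

definition \<mu>0 :: "(int \<Rightarrow> 'a) set \<Rightarrow> ennreal" where
  "\<mu>0 = (SOME \<mu>. (\<forall>s\<in>Loc. \<mu> s = f s) \<and> measure_space UNIV (sigma_sets UNIV Loc) \<mu>)"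

lemma \<mu>0: "(\<forall>s\<in>Loc. \<mu>0 s = f s) \<and> measure_space UNIV (sigma_sets UNIV Loc) \<mu>0"
  unfolding \<mu>0_def by (rule someI_ex[OF ring_of_sets.caratheodory'[OF ring_of_sets_Loc f_pos f_ca]])

definition \<mu> :: "(int \<Rightarrow> 'a) measure" where "\<mu> = measure_of UNIV (sigma_sets UNIV Loc) \<mu>0"

lemma sets_\<mu>: "sets \<mu> = sets shift_borel"
  unfolding \<mu>_def by (simp add: sets_measure_of_conv sigma_sets_sigma_sets_eq sets_shift_borel)

lemma space_\<mu>: "space \<mu> = UNIV"
  using sets_eq_imp_space_eq[OF sets_\<mu>] by simp

lemma emeasure_\<mu>: "A \<in> Loc \<Longrightarrow> emeasure \<mu> A = ennreal (wl A)"
proof -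
  assume A: "A \<in> Loc"
  have ms: "measure_space UNIV (sigma_sets UNIV Loc) \<mu>0" using \<mu>0 by blast
  have "emeasure \<mu> A = \<mu>0 A" unfolding \<mu>_def
    using ms A by (intro emeasure_measure_of_sigma) (auto simp: measure_space_def)
  then show ?thesis using \<mu>0 A by (simp add: f_def)
qed

lemma \<mu>_fin: "finite_measure \<mu>"
  by (rule finite_measureI) (simp add: space_\<mu> emeasure_\<mu>)

lemma \<mu>_inv: "\<forall>B\<in>sets shift_borel. emeasure \<mu> (shift -` B) = emeasure \<mu> B"
proof -
  have m: "shift \<in> \<mu> \<rightarrow>\<^sub>M shift_borel"
    using ulocal_measurable[OF ulocal_shift] by (simp add: measurable_cong_sets[OF sets_\<mu> refl])
  have eq: "distr \<mu> shift_borel shift = \<mu>"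
  proof (rule measure_eqI_generator_eq[OF Int_stable_Loc, where \<Omega> = UNIV and A = "\<lambda>_. UNIV"])
    show "Loc \<subseteq> Pow UNIV" by simp
    fix E :: "(int \<Rightarrow> 'a) set" assume E: "E \<in> Loc"
    have "emeasure (distr \<mu> shift_borel shift) E = emeasure \<mu> (shift -` E)"
      using emeasure_distr[OF m Loc_sets[OF E]] space_\<mu> by simp
    also have "\<dots> = emeasure \<mu> E" using emeasure_\<mu> E ulocal_Loc[OF ulocal_shift E] wl_shift by simp
    finally show "emeasure (distr \<mu> shift_borel shift) E = emeasure \<mu> E" .
  next
    show "sets (distr \<mu> shift_borel shift) = sigma_sets UNIV Loc" by (simp add: sets_shift_borel)
    show "sets \<mu> = sigma_sets UNIV Loc" by (simp add: sets_\<mu> sets_shift_borel)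
    show "range (\<lambda>_. UNIV) \<subseteq> Loc" by simp
    show "(\<Union>i. UNIV) = UNIV" by simp
    fix i :: nat
    show "emeasure (distr \<mu> shift_borel shift) UNIV \<noteq> \<infinity>"
    proof -
      have "emeasure (distr \<mu> shift_borel shift) UNIV = emeasure \<mu> (shift -` UNIV \<inter> space \<mu>)"
        by (rule emeasure_distr[OF m]) (rule Loc_sets[OF Loc_UNIV])
      then show ?thesis using space_\<mu> emeasure_\<mu>[OF Loc_UNIV] by simp
    qed
  qed
  show ?thesis
  proof
    fix B :: "(int \<Rightarrow> 'a) set" assume B: "B \<in> sets shift_borel"
    have "emeasure \<mu> (shift -` B) = emeasure (distr \<mu> shift_borel shift) B"
      using emeasure_distr[OF m B] space_\<mu> by simp
    then show "emeasure \<mu> (shift -` B) = emeasure \<mu> B" using eq by simp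
  qed
qed

lemma \<mu>_null: "emeasure \<mu> (UNIV - X) = 0"
proof -
  have "openin shift_top (UNIV - X)" using X unfolding subshift_def closedin_def by simp
  note U = open_Union_local[OF this]
  have "emeasure \<mu> (\<Union>n. {x. cyl n x \<subseteq> UNIV - X}) = 0"
  proof (rule emeasure_UN_eq_0)
    fix n
    have L: "{x. cyl n x \<subseteq> UNIV - X} \<in> Loc" using U(2) unfolding Loc_def by blast
    have "{x. cyl n x \<subseteq> UNIV - X} \<inter> X = {}" using cyl_self by blast
    then show "emeasure \<mu> {x. cyl n x \<subseteq> UNIV - X} = 0" using emeasure_\<mu>[OF L] wl_null[OF L] by simp
  next
    show "range (\<lambda>n. {x. cyl n x \<subseteq> UNIV - X}) \<subseteq> sets \<mu>"
      using U(2) sets_\<mu> local_sets by auto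
  qed
  then show ?thesis using U(1) by simp
qed

lemma \<mu>_in: "\<mu> \<in> inv_measures X"
  unfolding inv_measures_def using sets_\<mu> \<mu>_fin \<mu>_inv \<mu>_null by simp

lemma push_eq: "push_measure \<sigma> X \<mu> = \<nu>"
proof -
  have Xs: "X \<in> sets shift_borel" by (rule subshift_sets[OF X])
  have pin: "push_measure \<sigma> X \<mu> \<in> inv_measures Y" by (rule part1(1)[OF ne X \<mu>_in])
  then have pfin: "finite_measure (push_measure \<sigma> X \<mu>)" unfolding inv_measures_def by simp
  have nullX: "UNIV - X \<in> null_sets \<mu>"
    using \<mu>_null Xs sets_\<mu> sets.compl_sets[OF Xs] by (auto simp: null_sets_def)
  show ?thesis
  proof (rule measure_eqI_generator_eq[OF Int_stable_Loc, where \<Omega> = UNIV and A = "\<lambda>_. UNIV"])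
    show "Loc \<subseteq> Pow UNIV" by simp
    fix B :: "(int \<Rightarrow> 'b) set" assume B: "B \<in> Loc"
    have Bs: "B \<in> sets shift_borel" by (rule Loc_sets[OF B])
    have "emeasure (push_measure \<sigma> X \<mu>) B = (\<integral>\<^sup>+ x \<in> X. push_count \<sigma> B x \<partial>\<mu>)"
      by (rule emeasure_push[OF sets_\<mu> ne Xs Bs])
    also have "\<dots> = (\<Sum>k<Lmax \<sigma>. emeasure \<mu> (Ek \<sigma> k B \<inter> X))"
      by (rule push_fun_Ek[OF sets_\<mu> ne Xs Bs])
    also have "\<dots> = (\<Sum>k<Lmax \<sigma>. ennreal (wl (Ek \<sigma> k B)))"
    proof (intro sum.cong refl)
      fix k
      have EL: "Ek \<sigma> k B \<in> Loc" by (rule Ek_local[OF ne B])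
      have "Ek \<sigma> k B \<inter> X = Ek \<sigma> k B - (UNIV - X)" by blast
      then have "emeasure \<mu> (Ek \<sigma> k B \<inter> X) = emeasure \<mu> (Ek \<sigma> k B)"
        using emeasure_Diff_null_set[OF nullX] Loc_sets[OF EL] sets_\<mu> by simp
      then show "emeasure \<mu> (Ek \<sigma> k B \<inter> X) = ennreal (wl (Ek \<sigma> k B))" using emeasure_\<mu>[OF EL] by simp
    qed
    also have "\<dots> = ennreal (\<Sum>k<Lmax \<sigma>. wl (Ek \<sigma> k B))"
      using wl_nonneg Ek_local[OF ne B] by (intro sum_ennreal) auto
    also have "\<dots> = ennreal (measure \<nu> B)" using wl_Ek[OF B] by simp
    also have "\<dots> = emeasure \<nu> B" using finite_measure.emeasure_eq_measure[OF \<nu>_fin] by simp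
    finally show "emeasure (push_measure \<sigma> X \<mu>) B = emeasure \<nu> B" .
  next
    show "sets (push_measure \<sigma> X \<mu>) = sigma_sets UNIV Loc" by (simp add: sets_shift_borel)
    show "sets \<nu> = sigma_sets UNIV Loc" by (simp add: \<nu>_sets sets_shift_borel)
    show "range (\<lambda>_. UNIV) \<subseteq> Loc" by simp
    show "(\<Union>i. UNIV) = UNIV" by simp
    fix i :: nat
    show "emeasure (push_measure \<sigma> X \<mu>) UNIV \<noteq> \<infinity>"
      using finite_measure.emeasure_finite[OF pfin, of UNIV] by simp
  qed
qed

lemma surj: "\<exists>\<mu>\<in>inv_measures X. push_measure \<sigma> X \<mu> = \<nu>"
  using \<mu>_in push_eq by blast

end

theorem proposition3:
  fixes \<sigma> :: "'a::finite \<Rightarrow> 'b::finite list"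
    and X :: "(int \<Rightarrow> 'a) set"
  assumes "non_erasing \<sigma>" and "subshift X"
  shows "(\<forall>\<mu> \<in> inv_measures X.
            push_measure \<sigma> X \<mu> \<in> inv_measures (generated_subshift \<sigma> X) \<and>
            (\<forall>B \<in> sets shift_borel.
               emeasure (push_measure \<sigma> X \<mu>) B = (\<integral>\<^sup>+ x \<in> X. push_count \<sigma> B x \<partial>\<mu>)))
       \<and> (\<forall>\<nu> \<in> inv_measures (generated_subshift \<sigma> X).
            \<exists>\<mu> \<in> inv_measures X. push_measure \<sigma> X \<mu> = \<nu>)
       \<and> (\<forall>(\<sigma>' :: 'c::finite \<Rightarrow> 'a list) (X' :: (int \<Rightarrow> 'c) set).
            non_erasing \<sigma>' \<longrightarrow> subshift X' \<longrightarrow> X = generated_subshift \<sigma>' X' \<longrightarrow>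
            (\<forall>\<mu> \<in> inv_measures X'.
               push_measure (morph_comp \<sigma> \<sigma>') X' \<mu>
                 = push_measure \<sigma> X (push_measure \<sigma>' X' \<mu>)))"
proof (intro conjI ballI allI impI)
  fix \<mu> assume \<mu>: "\<mu> \<in> inv_measures X"
  show "push_measure \<sigma> X \<mu> \<in> inv_measures (generated_subshift \<sigma> X)"
    by (rule part1(1)[OF assms \<mu>])
  fix B :: "(int \<Rightarrow> 'b) set" assume "B \<in> sets shift_borel"
  then show "emeasure (push_measure \<sigma> X \<mu>) B = (\<integral>\<^sup>+ x \<in> X. push_count \<sigma> B x \<partial>\<mu>)"
    by (rule part1(2)[OF assms \<mu>])
next
  fix \<nu> assume \<nu>: "\<nu> \<in> inv_measures (generated_subshift \<sigma> X)"
  show "\<exists>\<mu> \<in> inv_measures X. push_measure \<sigma> X \<mu> = \<nu>"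
    by (rule surj_setup.surj[OF surj_setup.intro[OF assms \<nu>]])
next
  fix \<sigma>' :: "'c::finite \<Rightarrow> 'a list" and X' :: "(int \<Rightarrow> 'c) set" and \<mu>
  assume "non_erasing \<sigma>'" "subshift X'" "X = generated_subshift \<sigma>' X'" "\<mu> \<in> inv_measures X'"
  then show "push_measure (morph_comp \<sigma> \<sigma>') X' \<mu> = push_measure \<sigma> X (push_measure \<sigma>' X' \<mu>)"
    by (intro part3[OF assms(1)])
qed

end
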